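(* For every $E\subseteq\mathbb{F}_q^2$, $$\sum_{\theta\in O(\mathbb{F}_q^2)}\sum_{w\in\mathbb{F}_q^2}\Big(\lambda_\theta(w)-\frac{|E|^2}{q^2}\Big)^2\lesssim q|E|^{5/2},\qquad \sum_{\theta\in O(\mathbb{F}_q^2)}\sum_{w\in\mathbb{F}_q^2}\lambda_\theta(w)^2\lesssim q|E|^{5/2}+\frac{|E|^4}{q}.$$
   Context: Standing assumptions: $q=p^n$ with $p$ a prime, $p\equiv 3\pmod 4$, $n$ odd. $O(\mathbb{F}_q^2)$ is the group of $2\times2$ matrices $\theta$ over $\mathbb{F}_q$ with $\theta^T\theta=I$. For $E\subseteq\mathbb{F}_q^2$, $\theta\in O(\mathbb{F}_q^2)$, $w\in\mathbb{F}_q^2$: $\lambda_\theta(w)=|\{(u,v)\in E^2: u-\theta v=w\}|$. $A\lesssim B$ means $A\le cB$ with $c$ independent of $q$ and $E$. *)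

theory Defs
  imports Complex_Main "HOL-Algebra.Ring" "HOL-Computational_Algebra.Primes"
begin

text \<open>Vectors of F_q^2 are pairs of field elements. A 2x2 matrix
  theta = [[a,b],[c,d]] is represented by the quadruple (a,b,c,d).\<close>

type_synonym 'a mat2 = "'a \<times> 'a \<times> 'a \<times> 'a"

definition mat2_apply :: "('a, 'b) ring_scheme \<Rightarrow> 'a mat2 \<Rightarrow> 'a \<times> 'a \<Rightarrow> 'a \<times> 'a" where
  "mat2_apply R \<theta> v = (case \<theta> of (a, b, c, d) \<Rightarrow>
     (a \<otimes>\<^bsub>R\<^esub> fst v \<oplus>\<^bsub>R\<^esub> b \<otimes>\<^bsub>R\<^esub> snd v,
      c \<otimes>\<^bsub>R\<^esub> fst v \<oplus>\<^bsub>R\<^esub> d \<otimes>\<^bsub>R\<^esub> snd v))"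

definition orth2 :: "('a, 'b) ring_scheme \<Rightarrow> 'a mat2 set" where
  "orth2 R = {(a, b, c, d). a \<in> carrier R \<and> b \<in> carrier R \<and> c \<in> carrier R \<and> d \<in> carrier R \<and>
     a \<otimes>\<^bsub>R\<^esub> a \<oplus>\<^bsub>R\<^esub> c \<otimes>\<^bsub>R\<^esub> c = \<one>\<^bsub>R\<^esub> \<and>
     b \<otimes>\<^bsub>R\<^esub> b \<oplus>\<^bsub>R\<^esub> d \<otimes>\<^bsub>R\<^esub> d = \<one>\<^bsub>R\<^esub> \<and>
     a \<otimes>\<^bsub>R\<^esub> b \<oplus>\<^bsub>R\<^esub> c \<otimes>\<^bsub>R\<^esub> d = \<zero>\<^bsub>R\<^esub>}"

definition vsub :: "('a, 'b) ring_scheme \<Rightarrow> 'a \<times> 'a \<Rightarrow> 'a \<times> 'a \<Rightarrow> 'a \<times> 'a" where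
  "vsub R u v = (fst u \<ominus>\<^bsub>R\<^esub> fst v, snd u \<ominus>\<^bsub>R\<^esub> snd v)"

definition lam :: "('a, 'b) ring_scheme \<Rightarrow> ('a \<times> 'a) set \<Rightarrow> 'a mat2 \<Rightarrow> 'a \<times> 'a \<Rightarrow> nat" where
  "lam R E \<theta> w = card {(u, v) \<in> E \<times> E. vsub R u (mat2_apply R \<theta> v) = w}"

end

theory Submission
  imports Defs "HOL-Algebra.Multiplicative_Group" "HOL-Number_Theory.Cong"
begin

locale fq = field R for R :: "('a,'b) ring_scheme" (structure) +
  fixes p n :: nat
  assumes prime_p: "prime p" and p3: "p mod 4 = 3" and odd_n: "odd n"
    and card_R: "card (carrier R) = p ^ n"
begin

lemma fin: "finite (carrier R)"
  using card_R prime_p card.infinite by (metis not_prime_0 power_not_zero zero_neq_numeral p3 mod_0)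

lemma addpow_card: "x \<in> carrier R \<Longrightarrow> [card (carrier R)] \<cdot> x = \<zero>"
  using group.pow_order_eq_1[OF add.is_group, of x] fin unfolding order_def by (simp add: add_pow_def)

lemma multpow_card: "x \<in> carrier R \<Longrightarrow> x \<noteq> \<zero> \<Longrightarrow> x [^] (card (carrier R) - 1) = \<one>"
  using group.pow_order_eq_1[OF field_mult_group, of x] order_mult_of[OF fin]
  by (simp add: nat_pow_mult_of order_def)


lemma one_pow: "[(a * b::nat)] \<cdot> \<one> = ([a] \<cdot> \<one>) \<otimes> ([b] \<cdot> \<one>)"
proof -
  have "([a] \<cdot> \<one>) \<otimes> ([b] \<cdot> \<one>) = [a] \<cdot> (\<one> \<otimes> ([b] \<cdot> \<one>))"
    by (rule add_pow_ldistr) simp_all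
  also have "\<dots> = [a] \<cdot> ([b] \<cdot> \<one>)" by simp
  also have "\<dots> = [(b * a)] \<cdot> \<one>" by (rule add.nat_pow_pow) simp
  finally show ?thesis by (simp add: mult.commute)
qed

lemma one_pow_power: "[(p ^ k)] \<cdot> \<one> = ([p] \<cdot> \<one>) [^] k"
proof (induction k)
  case 0 show ?case by simp
next
  case (Suc k)
  have "[(p ^ Suc k)] \<cdot> \<one> = [(p ^ k * p)] \<cdot> \<one>" by (simp add: mult.commute)
  also have "\<dots> = ([(p ^ k)] \<cdot> \<one>) \<otimes> ([p] \<cdot> \<one>)" by (rule one_pow)
  also have "\<dots> = ([p] \<cdot> \<one>) [^] Suc k" using Suc by simp
  finally show ?case .
qed

lemma char_p: "[p] \<cdot> \<one> = \<zero>"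
proof (rule ccontr)
  assume h: "[p] \<cdot> \<one> \<noteq> \<zero>"
  have "([p] \<cdot> \<one>) [^] n \<noteq> \<zero>"
    using h by (induction n) (simp_all add: integral_iff)
  moreover have "([p] \<cdot> \<one>) [^] n = \<zero>" using addpow_card[of \<one>] card_R one_pow_power[of n] by simp
  ultimately show False by simp
qed

lemma addpow_p: "x \<in> carrier R \<Longrightarrow> [p] \<cdot> x = \<zero>"
proof -
  assume x: "x \<in> carrier R"
  have "([p] \<cdot> \<one>) \<otimes> x = [p] \<cdot> (\<one> \<otimes> x)" by (rule add_pow_ldistr) (simp_all add: x)
  then show ?thesis using x char_p by simp
qed

lemma two_nz: "\<one> \<oplus> \<one> \<noteq> \<zero>"
proof
  assume h: "\<one> \<oplus> \<one> = \<zero>"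
  have h2: "[(2::nat)] \<cdot> \<one> = \<zero>" using h by (simp add: numeral_2_eq_2)
  have "\<exists>k. p = Suc (2 * k)" using p3 by presburger
  then obtain k where k: "p = Suc (2 * k)" by blast
  have "[p] \<cdot> \<one> = [(2 * k)] \<cdot> \<one> \<oplus> \<one>" unfolding k by (rule add.nat_pow_Suc)
  also have "[(2 * k)] \<cdot> \<one> = [k] \<cdot> ([(2::nat)] \<cdot> \<one>)" by (rule add.nat_pow_pow[symmetric]) simp
  also have "\<dots> = \<zero>" using h2 by simp
  finally have "[p] \<cdot> \<one> = \<one>" by simp
  then show False using char_p by simp
qed

lemma three_pow: "(3::nat) ^ (2 * k + 1) mod 4 = 3"
proof (induction k)
  case 0 show ?case by simp
next
  case (Suc k)
  have "(3::nat) ^ (2 * Suc k + 1) = 9 * 3 ^ (2 * k + 1)" by simp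
  then have "(3::nat) ^ (2 * Suc k + 1) mod 4 = (9 * (3 ^ (2 * k + 1) mod 4)) mod 4"
    by (simp add: mod_mult_right_eq)
  then show ?case using Suc by simp
qed

lemma q_mod4: "card (carrier R) mod 4 = 3"
proof -
  obtain k where k: "n = 2 * k + 1" using odd_n oddE by blast
  have "p ^ n mod 4 = (p mod 4) ^ n mod 4" by (simp add: power_mod)
  also have "\<dots> = 3 ^ (2*k+1) mod 4" using p3 k by simp
  also have "\<dots> = 3" by (rule three_pow)
  finally show ?thesis using card_R by simp
qed

lemma neg1_nonsq: "x \<in> carrier R \<Longrightarrow> x \<otimes> x \<noteq> \<ominus> \<one>"
proof
  assume x: "x \<in> carrier R" and h: "x \<otimes> x = \<ominus> \<one>"
  have xnz: "x \<noteq> \<zero>"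
  proof
    assume "x = \<zero>"
    then have "\<ominus> \<one> = \<zero>" using h by simp
    then have "\<one> = \<zero>" by (metis minus_minus minus_zero one_closed)
    then show False by simp
  qed
  have "\<exists>k. card (carrier R) - 1 = 4 * k + 2" using q_mod4 by presburger
  then obtain k where k: "card (carrier R) - 1 = 2 * (2 * k + 1)" by auto
  have m1: "\<ominus> \<one> \<otimes> \<ominus> \<one> = \<one>" by (simp add: l_minus r_minus)
  have pk: "(\<ominus> \<one>) [^] (2 * k) = \<one>"
  proof -
    have "(\<ominus> \<one>) [^] (2 * k) = ((\<ominus> \<one>) [^] (2::nat)) [^] k" by (simp add: nat_pow_pow)
    also have "(\<ominus> \<one>) [^] (2::nat) = \<one>" using m1 by (simp add: numeral_2_eq_2)
    finally show ?thesis by simp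
  qed
  have "(x [^] (2::nat)) [^] (2 * k + 1) = x [^] (2 * (2 * k + 1))"
    by (rule nat_pow_pow[OF x])
  then have "x [^] (card (carrier R) - 1) = (x [^] (2::nat)) [^] (2 * k + 1)"
    using k by simp
  also have "x [^] (2::nat) = \<ominus> \<one>" using h x by (simp add: numeral_2_eq_2)
  also have "(\<ominus> \<one>) [^] (2 * k + 1) = \<ominus> \<one>" using pk by simp
  finally have "\<ominus> \<one> = \<one>" using multpow_card[OF x xnz] by simp
  then have "\<one> \<oplus> \<one> = \<zero>" by (metis l_neg one_closed)
  then show False using two_nz by simp
qed

lemma norm_zero:
  assumes a: "a \<in> carrier R" and b: "b \<in> carrier R" and h: "a \<otimes> a \<oplus> b \<otimes> b = \<zero>"
  shows "a = \<zero> \<and> b = \<zero>"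
proof (cases "b = \<zero>")
  case True
  then show ?thesis using h a by (simp add: integral_iff)
next
  case False
  have ib: "inv b \<in> carrier R" "b \<otimes> inv b = \<one>" using False b by (simp_all add: field_Units)
  define c where "c = a \<otimes> inv b"
  have c: "c \<in> carrier R" using a ib by (simp add: c_def)
  have "c \<otimes> c \<oplus> \<one> = (a \<otimes> a \<oplus> b \<otimes> b) \<otimes> (inv b \<otimes> inv b) \<oplus> (\<one> \<ominus> (b \<otimes> inv b) \<otimes> (b \<otimes> inv b))"
    using a b ib(1) unfolding c_def by algebra
  also have "\<dots> = \<zero>" using h ib by (simp add: a_minus_def r_neg)
  finally have "\<ominus> \<one> = c \<otimes> c" using c by (intro minus_equality) simp_all
  then show ?thesis using neg1_nonsq[OF c] by simp
qed

end

context fq begin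

lemma p_gt2: "p > 2" using p3 by presburger

lemma inv_mod: "i mod p \<noteq> 0 \<Longrightarrow> \<exists>i'. (i * i') mod p = 1"
proof -
  assume "i mod p \<noteq> 0"
  then have "\<not> p dvd i" by (simp add: dvd_eq_mod_eq_0)
  then have "coprime p i" using prime_imp_coprime prime_p by blast
  then have "coprime i p" by (simp add: coprime_commute)
  then obtain x where "[i * x = Suc 0] (mod p)" using cong_solve_coprime_nat by blast
  then have "(i * x) mod p = 1" using p_gt2 by (simp add: cong_def)
  then show ?thesis by blast
qed

lemma pow_mod: "y \<in> carrier R \<Longrightarrow> [(i::nat)] \<cdot> y = [(i mod p)] \<cdot> y"
proof -
  assume y: "y \<in> carrier R"
  have "[i] \<cdot> y = [(i mod p + p * (i div p))] \<cdot> y" by simp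
  also have "\<dots> = [(i mod p)] \<cdot> y \<oplus> [(p * (i div p))] \<cdot> y"
    by (rule add.nat_pow_mult[symmetric]) (rule y)
  also have "[(p * (i div p))] \<cdot> y = [(i div p)] \<cdot> ([p] \<cdot> y)"
    by (rule add.nat_pow_pow[symmetric]) (rule y)
  also have "\<dots> = \<zero>" using addpow_p[OF y] by simp
  finally show ?thesis using y by simp
qed

definition asub :: "'a set \<Rightarrow> bool" where
  "asub M \<longleftrightarrow> M \<subseteq> carrier R \<and> \<zero> \<in> M \<and> (\<forall>a\<in>M. \<forall>b\<in>M. a \<oplus> b \<in> M) \<and> (\<forall>a\<in>M. \<ominus> a \<in> M)"

lemma asub_pow: "asub M \<Longrightarrow> m \<in> M \<Longrightarrow> [(j::nat)] \<cdot> m \<in> M"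
proof (induction j)
  case 0 then show ?case by (simp add: asub_def)
next
  case (Suc j) then show ?case by (simp add: asub_def)
qed

lemma max_sub: "\<exists>M. asub M \<and> \<one> \<notin> M \<and> (\<forall>M'. asub M' \<and> \<one> \<notin> M' \<longrightarrow> card M' \<le> card M)"
proof -
  let ?F = "{M. asub M \<and> \<one> \<notin> M}"
  have finF: "finite ?F"
    by (rule finite_subset[of _ "Pow (carrier R)"]) (auto simp: asub_def fin)
  have "{\<zero>} \<in> ?F" by (simp add: asub_def)
  then have ne: "card ` ?F \<noteq> {}" by blast
  obtain M where M: "M \<in> ?F" "card M = Max (card ` ?F)"
    using Max_in[OF finite_imageI[OF finF] ne] by auto
  have "\<forall>M'. asub M' \<and> \<one> \<notin> M' \<longrightarrow> card M' \<le> card M"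
    using M(2) finF by (auto intro: Max_ge)
  then show ?thesis using M(1) by blast
qed

definition M0 where "M0 = (SOME M. asub M \<and> \<one> \<notin> M \<and> (\<forall>M'. asub M' \<and> \<one> \<notin> M' \<longrightarrow> card M' \<le> card M))"

lemma M0: "asub M0" "\<one> \<notin> M0" "\<And>M'. asub M' \<Longrightarrow> \<one> \<notin> M' \<Longrightarrow> card M' \<le> card M0"
  using someI_ex[OF max_sub] unfolding M0_def by blast+

lemma M0_sub: "m \<in> M0 \<Longrightarrow> m \<in> carrier R" using M0(1) by (auto simp: asub_def)

lemma neg_pow: "y \<in> carrier R \<Longrightarrow> \<ominus> ([(j::nat)] \<cdot> y) = [(j * (p - 1))] \<cdot> y"
proof -
  assume y: "y \<in> carrier R"
  have "[j] \<cdot> y \<oplus> [(j * (p - 1))] \<cdot> y = [(j + j * (p - 1))] \<cdot> y"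
    by (rule add.nat_pow_mult) (rule y)
  also have "j + j * (p - 1) = p * j" using p_gt2 by (simp add: algebra_simps)
  also have "[(p * j)] \<cdot> y = [j] \<cdot> ([p] \<cdot> y)" by (rule add.nat_pow_pow[symmetric]) (rule y)
  also have "\<dots> = \<zero>" using addpow_p[OF y] by simp
  finally have "[j] \<cdot> y \<oplus> [(j * (p - 1))] \<cdot> y = \<zero>" .
  then have "[(j * (p - 1))] \<cdot> y \<oplus> [j] \<cdot> y = \<zero>" using y by (simp add: a_comm)
  then show ?thesis using y by (intro minus_equality) simp_all
qed

definition span where "span y = {m \<oplus> [(j::nat)] \<cdot> y | m j. m \<in> M0}"

lemma span_asub: assumes y: "y \<in> carrier R" shows "asub (span y)"
proof -
  have s1: "span y \<subseteq> carrier R" using y M0_sub by (auto simp: span_def)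
  have s2: "\<zero> \<in> span y" unfolding span_def
    using M0(1) y by (auto simp: asub_def intro!: exI[of _ \<zero>] exI[of _ "0::nat"])
  have s3: "a \<oplus> b \<in> span y" if a: "a \<in> span y" and b: "b \<in> span y" for a b
  proof -
    obtain m and j :: nat where a': "a = m \<oplus> [j] \<cdot> y" "m \<in> M0" using a by (auto simp: span_def)
    obtain m' and j' :: nat where b': "b = m' \<oplus> [j'] \<cdot> y" "m' \<in> M0" using b by (auto simp: span_def)
    have "a \<oplus> b = (m \<oplus> m') \<oplus> ([j] \<cdot> y \<oplus> [j'] \<cdot> y)"
      using a' b' y M0_sub by (simp add: a_ac)
    also have "\<dots> = (m \<oplus> m') \<oplus> [(j + j')] \<cdot> y" using y by (simp add: add.nat_pow_mult)
    finally show ?thesis using a'(2) b'(2) M0(1) unfolding span_def asub_def by blast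
  qed
  have s4: "\<ominus> a \<in> span y" if a: "a \<in> span y" for a
  proof -
    obtain m and j :: nat where a': "a = m \<oplus> [j] \<cdot> y" "m \<in> M0" using a by (auto simp: span_def)
    have "\<ominus> a = \<ominus> m \<oplus> \<ominus> ([j] \<cdot> y)" using a' y M0_sub by (simp add: minus_add)
    also have "\<dots> = \<ominus> m \<oplus> [(j * (p - 1))] \<cdot> y" using neg_pow[OF y] by simp
    finally show ?thesis using a'(2) M0(1) unfolding span_def asub_def by blast
  qed
  show ?thesis using s1 s2 s3 s4 by (simp add: asub_def)
qed

lemma M0_span: assumes "y \<in> carrier R" shows "M0 \<subseteq> span y"
proof
  fix x assume "x \<in> M0"
  then have "x = x \<oplus> [(0::nat)] \<cdot> y" using M0_sub assms by simp
  then show "x \<in> span y" unfolding span_def using \<open>x \<in> M0\<close> by blast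
qed

lemma y_span: "y \<in> carrier R \<Longrightarrow> y \<in> span y"
  unfolding span_def using M0(1) by (auto simp: asub_def intro!: exI[of _ \<zero>] exI[of _ "1::nat"])

lemma rep_exists: assumes y: "y \<in> carrier R" shows "\<exists>m\<in>M0. \<exists>j::nat. y = m \<oplus> [j] \<cdot> \<one>"
proof (cases "y \<in> M0")
  case True then show ?thesis using y by (auto intro!: bexI[of _ y] exI[of _ "0::nat"])
next
  case False
  have "M0 \<subset> span y" using M0_span[OF y] y_span[OF y] False by blast
  moreover have "finite (span y)" using span_asub[OF y] fin finite_subset by (auto simp: asub_def)
  ultimately have "card M0 < card (span y)" by (rule psubset_card_mono[rotated])
  then have "\<one> \<in> span y" using M0(3)[OF span_asub[OF y]] by force
  then obtain m and i :: nat where mi: "\<one> = m \<oplus> [i] \<cdot> y" "m \<in> M0" by (auto simp: span_def)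
  have m: "m \<in> carrier R" using mi M0_sub by simp
  have "i mod p \<noteq> 0"
  proof
    assume "i mod p = 0"
    then have "[i] \<cdot> y = \<zero>" using pow_mod[OF y, of i] by simp
    then show False using mi m M0(2) by simp
  qed
  then obtain i' where i': "(i * i') mod p = 1" using inv_mod by blast
  have "y = [(i * i')] \<cdot> y" using pow_mod[OF y, of "i * i'"] i' y by simp
  also have "\<dots> = [i'] \<cdot> ([i] \<cdot> y)" by (rule add.nat_pow_pow[symmetric]) (rule y)
  also have "[i] \<cdot> y = \<ominus> m \<oplus> \<one>" using mi m y by (simp add: a_assoc[symmetric] l_neg)
  also have "[i'] \<cdot> (\<ominus> m \<oplus> \<one>) = [i'] \<cdot> (\<ominus> m) \<oplus> [i'] \<cdot> \<one>"
    using m by (simp add: add.nat_pow_distrib)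
  finally have "y = [i'] \<cdot> (\<ominus> m) \<oplus> [i'] \<cdot> \<one>" .
  moreover have "[i'] \<cdot> (\<ominus> m) \<in> M0" using M0(1) mi(2) by (intro asub_pow) (auto simp: asub_def)
  ultimately show ?thesis by blast
qed

lemma cancel3: "a \<in> carrier R \<Longrightarrow> b \<in> carrier R \<Longrightarrow> c \<in> carrier R \<Longrightarrow> c = (a \<oplus> b \<oplus> c) \<ominus> a \<ominus> b"
  by algebra
lemma cancel3b: "a \<in> carrier R \<Longrightarrow> b \<in> carrier R \<Longrightarrow> c \<in> carrier R \<Longrightarrow> (a \<oplus> c) \<ominus> b \<ominus> c = a \<oplus> \<ominus> b"
  by algebra

lemma rep_unique_le:
  assumes m: "m \<in> M0" and m': "m' \<in> M0" and le: "j' \<le> j"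
    and eq: "m \<oplus> [(j::nat)] \<cdot> \<one> = m' \<oplus> [(j'::nat)] \<cdot> \<one>"
  shows "j mod p = j' mod p"
proof -
  define d where "d = j - j'"
  have jd: "j = j' + d" using le by (simp add: d_def)
  have mc: "m \<in> carrier R" "m' \<in> carrier R" using m m' M0_sub by auto
  have "[j] \<cdot> \<one> = [j'] \<cdot> \<one> \<oplus> [d] \<cdot> \<one>" unfolding jd by (rule add.nat_pow_mult[symmetric]) simp
  then have eq2: "m \<oplus> [j'] \<cdot> \<one> \<oplus> [d] \<cdot> \<one> = m' \<oplus> [j'] \<cdot> \<one>" using eq mc by (simp add: a_assoc)
  have pc: "[j'] \<cdot> \<one> \<in> carrier R" "[d] \<cdot> \<one> \<in> carrier R" by simp_all
  have "[d] \<cdot> \<one> = (m \<oplus> [j'] \<cdot> \<one> \<oplus> [d] \<cdot> \<one>) \<ominus> m \<ominus> [j'] \<cdot> \<one>"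
    using cancel3[OF mc(1) pc] .
  also have "\<dots> = (m' \<oplus> [j'] \<cdot> \<one>) \<ominus> m \<ominus> [j'] \<cdot> \<one>" using eq2 by simp
  also have "\<dots> = m' \<oplus> \<ominus> m" using cancel3b[OF mc(2) mc(1) pc(1)] .
  finally have dM: "[d] \<cdot> \<one> \<in> M0" using M0(1) m m' by (simp add: asub_def)
  have "d mod p = 0"
  proof (rule ccontr)
    assume "d mod p \<noteq> 0"
    then obtain d' where d': "(d * d') mod p = 1" using inv_mod by blast
    have "\<one> = [(d * d')] \<cdot> \<one>" using pow_mod[of \<one> "d * d'"] d' by simp
    also have "\<dots> = [d'] \<cdot> ([d] \<cdot> \<one>)" by (rule add.nat_pow_pow[symmetric]) simp
    finally have "\<one> \<in> M0" using asub_pow[OF M0(1) dM, of d'] by simp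
    then show False using M0(2) by simp
  qed
  then show ?thesis using jd by (simp add: mod_add_right_eq[symmetric])
qed

lemma rep_unique:
  assumes m: "m \<in> M0" and m': "m' \<in> M0"
    and eq: "m \<oplus> [(j::nat)] \<cdot> \<one> = m' \<oplus> [(j'::nat)] \<cdot> \<one>"
  shows "j mod p = j' mod p"
proof (cases "j' \<le> j")
  case True then show ?thesis using rep_unique_le[OF m m' _ eq] by simp
next
  case False then show ?thesis using rep_unique_le[OF m' m _ eq[symmetric]] by simp
qed

definition J where "J y = (SOME j::nat. \<exists>m\<in>M0. y = m \<oplus> [j] \<cdot> \<one>)"

definition psi :: "'a \<Rightarrow> complex" where "psi y = cis (2 * pi * real (J y) / real p)"

lemma cis_mod: "cis (2 * pi * real a / real p) = cis (2 * pi * real (a mod p) / real p)"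
proof -
  have p0: "real p > 0" using p_gt2 by simp
  have "real a = real (a mod p) + real p * real (a div p)"
    by (metis of_nat_add of_nat_mult mod_div_mult_eq mult.commute)
  then have "2 * pi * real a / real p = 2 * pi * real (a mod p) / real p + 2 * pi * real (a div p)"
    using p0 by (simp add: field_simps)
  then have "cis (2 * pi * real a / real p) = cis (2 * pi * real (a mod p) / real p) * cis (2 * pi * real (a div p))"
    by (simp only: cis_mult)
  also have "cis (2 * pi * real (a div p)) = 1" by (rule cis_multiple_2pi) simp
  finally show ?thesis by simp
qed

lemma psi_rep: assumes m: "m \<in> M0" shows "psi (m \<oplus> [(j::nat)] \<cdot> \<one>) = cis (2 * pi * real j / real p)"
proof -
  have "\<exists>j'::nat. \<exists>m'\<in>M0. m \<oplus> [j] \<cdot> \<one> = m' \<oplus> [j'] \<cdot> \<one>" using m by blast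
  then have "\<exists>m'\<in>M0. m \<oplus> [j] \<cdot> \<one> = m' \<oplus> [J (m \<oplus> [j] \<cdot> \<one>)] \<cdot> \<one>"
    unfolding J_def by (rule someI_ex)
  then obtain m' where m': "m' \<in> M0" "m \<oplus> [j] \<cdot> \<one> = m' \<oplus> [J (m \<oplus> [j] \<cdot> \<one>)] \<cdot> \<one>" by blast
  have "J (m \<oplus> [j] \<cdot> \<one>) mod p = j mod p" using rep_unique[OF m'(1) m m'(2)[symmetric]] .
  then show ?thesis unfolding psi_def using cis_mod by metis
qed

lemma psi_add: assumes x: "x \<in> carrier R" and y: "y \<in> carrier R"
  shows "psi (x \<oplus> y) = psi x * psi y"
proof -
  obtain m and j :: nat where mj: "m \<in> M0" "x = m \<oplus> [j] \<cdot> \<one>" using rep_exists[OF x] by blast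
  obtain m' and j' :: nat where mj': "m' \<in> M0" "y = m' \<oplus> [j'] \<cdot> \<one>" using rep_exists[OF y] by blast
  have mc: "m \<in> carrier R" "m' \<in> carrier R" using mj mj' M0_sub by auto
  have "x \<oplus> y = (m \<oplus> m') \<oplus> ([j] \<cdot> \<one> \<oplus> [j'] \<cdot> \<one>)" using mj mj' mc by (simp add: a_ac)
  also have "\<dots> = (m \<oplus> m') \<oplus> [(j + j')] \<cdot> \<one>" by (simp add: add.nat_pow_mult)
  finally have "psi (x \<oplus> y) = cis (2 * pi * real (j + j') / real p)"
    using psi_rep[of "m \<oplus> m'"] M0(1) mj mj' by (simp add: asub_def)
  also have "\<dots> = cis (2 * pi * real j / real p) * cis (2 * pi * real j' / real p)"
    by (simp add: cis_mult add_divide_distrib distrib_left)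
  finally show ?thesis using psi_rep mj mj' by simp
qed

lemma psi_norm: "cmod (psi y) = 1" by (simp add: psi_def)

lemma psi_one: "psi \<one> \<noteq> 1"
proof -
  have "\<one> = \<zero> \<oplus> [(1::nat)] \<cdot> \<one>" by simp
  then have "psi \<one> = cis (2 * pi / real p)" using psi_rep[of \<zero> 1] M0(1) by (simp add: asub_def)
  moreover have "sin (2 * pi / real p) > 0"
  proof (rule sin_gt_zero)
    show "0 < 2 * pi / real p" using p_gt2 by simp
    have "2 * pi / real p < 2 * pi / 2" using p_gt2 by (intro divide_strict_left_mono) auto
    then show "2 * pi / real p < pi" by simp
  qed
  ultimately show ?thesis by (auto simp: complex_eq_iff)
qed

lemma psi_exists: "\<exists>\<psi>::'a \<Rightarrow> complex. (\<forall>x\<in>carrier R. \<forall>y\<in>carrier R. \<psi> (x \<oplus> y) = \<psi> x * \<psi> y)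
   \<and> (\<forall>x. cmod (\<psi> x) = 1) \<and> (\<exists>x0\<in>carrier R. \<psi> x0 \<noteq> 1)"
  using psi_add psi_norm psi_one by (intro exI[of _ psi]) auto

end

locale fqc = fq +
  fixes chi :: "'a \<Rightarrow> complex"
  assumes chi_add: "x \<in> carrier R \<Longrightarrow> y \<in> carrier R \<Longrightarrow> chi (x \<oplus> y) = chi x * chi y"
    and chi_norm: "cmod (chi x) = 1"
    and chi_nontriv: "\<exists>x0\<in>carrier R. chi x0 \<noteq> 1"
begin

abbreviation V where "V \<equiv> carrier R \<times> carrier R"
abbreviation q where "q \<equiv> card (carrier R)"

definition dot :: "'a \<times> 'a \<Rightarrow> 'a \<times> 'a \<Rightarrow> 'a" where
  "dot z x = fst z \<otimes> fst x \<oplus> snd z \<otimes> snd x"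

definition e :: "'a \<times> 'a \<Rightarrow> 'a \<times> 'a \<Rightarrow> complex" where
  "e z x = chi (dot z x)"

definition vadd :: "'a \<times> 'a \<Rightarrow> 'a \<times> 'a \<Rightarrow> 'a \<times> 'a" where
  "vadd u v = (fst u \<oplus> fst v, snd u \<oplus> snd v)"

lemma chi_zero: "chi \<zero> = 1"
proof -
  have "chi \<zero> = chi \<zero> * chi \<zero>" using chi_add[of \<zero> \<zero>] by simp
  moreover have "chi \<zero> \<noteq> 0" using chi_norm[of \<zero>] by auto
  ultimately show ?thesis by (metis mult_cancel_left1)
qed

lemma chi_cnj: "chi x * cnj (chi x) = 1"
  using complex_norm_square[of "chi x"] chi_norm[of x] by simp

lemma chi_neg: "x \<in> carrier R \<Longrightarrow> chi (\<ominus> x) = cnj (chi x)"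
proof -
  assume x: "x \<in> carrier R"
  have "chi x * chi (\<ominus> x) = 1" using chi_add[of x "\<ominus> x"] x chi_zero by (simp add: r_neg)
  then have "cnj (chi x) * (chi x * chi (\<ominus> x)) = cnj (chi x)" by simp
  then show ?thesis using chi_cnj[of x] by (simp add: mult.assoc[symmetric] mult.commute)
qed

lemma chi_minus: "x \<in> carrier R \<Longrightarrow> y \<in> carrier R \<Longrightarrow> chi (x \<ominus> y) = chi x * cnj (chi y)"
  by (simp add: a_minus_def chi_add chi_neg)

lemma charsum1: assumes a: "a \<in> carrier R"
  shows "(\<Sum>x\<in>carrier R. chi (a \<otimes> x)) = (if a = \<zero> then of_nat q else 0)"
proof (cases "a = \<zero>")
  case True then show ?thesis using chi_zero by simp
next
  case False
  obtain x0 where x0: "x0 \<in> carrier R" "chi x0 \<noteq> 1" using chi_nontriv by blast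
  have ia: "inv a \<in> carrier R" "a \<otimes> inv a = \<one>" using False a by (simp_all add: field_Units)
  define y0 where "y0 = inv a \<otimes> x0"
  have y0: "y0 \<in> carrier R" "a \<otimes> y0 = x0" using ia x0 a
    by (simp_all add: y0_def m_assoc[symmetric])
  let ?S = "\<Sum>x\<in>carrier R. chi (a \<otimes> x)"
  have bij: "bij_betw (\<lambda>x. x \<oplus> y0) (carrier R) (carrier R)"
  proof (rule bij_betwI[where g = "\<lambda>x. x \<ominus> y0"])
    show "(\<lambda>x. x \<oplus> y0) \<in> carrier R \<rightarrow> carrier R" using y0 by auto
    show "(\<lambda>x. x \<ominus> y0) \<in> carrier R \<rightarrow> carrier R" using y0 by auto
    show "x \<oplus> y0 \<ominus> y0 = x" if "x \<in> carrier R" for x using that y0 by algebra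
    show "x \<ominus> y0 \<oplus> y0 = x" if "x \<in> carrier R" for x using that y0 by algebra
  qed
  have "?S = (\<Sum>x\<in>carrier R. chi (a \<otimes> (x \<oplus> y0)))"
    using sum.reindex_bij_betw[OF bij, of "\<lambda>x. chi (a \<otimes> x)"] by simp
  also have "\<dots> = (\<Sum>x\<in>carrier R. chi (a \<otimes> x) * chi x0)"
    using y0 a x0(1) by (intro sum.cong) (simp_all add: r_distr chi_add)
  also have "\<dots> = ?S * chi x0" by (simp add: sum_distrib_right)
  finally have "?S * (1 - chi x0) = 0" by (simp add: algebra_simps)
  then have "?S = 0" using x0 by simp
  then show ?thesis using False by simp
qed

lemma e_split: "e z x = chi (fst z \<otimes> fst x) * chi (snd z \<otimes> snd x)"
  if "z \<in> V" "x \<in> V" for z x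
  using that by (auto simp: e_def dot_def chi_add)

lemma charsum2: assumes z: "z \<in> V"
  shows "(\<Sum>x\<in>V. e z x) = (if z = (\<zero>, \<zero>) then of_nat q ^ 2 else 0)"
proof -
  have "(\<Sum>x\<in>V. e z x) = (\<Sum>x1\<in>carrier R. \<Sum>x2\<in>carrier R. e z (x1, x2))"
    by (simp add: sum.cartesian_product)
  also have "\<dots> = (\<Sum>x1\<in>carrier R. \<Sum>x2\<in>carrier R. chi (fst z \<otimes> x1) * chi (snd z \<otimes> x2))"
    using z by (intro sum.cong refl) (simp add: e_split)
  also have "\<dots> = (\<Sum>x1\<in>carrier R. chi (fst z \<otimes> x1)) * (\<Sum>x2\<in>carrier R. chi (snd z \<otimes> x2))"
    by (simp add: sum_product)
  also have "\<dots> = (if z = (\<zero>, \<zero>) then of_nat q ^ 2 else 0)"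
    using z charsum1[of "fst z"] charsum1[of "snd z"] by (cases z) (auto simp: power2_eq_square)
  finally show ?thesis .
qed

lemma dot_closed: "z \<in> V \<Longrightarrow> x \<in> V \<Longrightarrow> dot z x \<in> carrier R"
  by (auto simp: dot_def)

lemma e_sym: "e z x = e x z" if "z \<in> V" "x \<in> V"
  using that by (auto simp: e_def dot_def m_comm)

lemma e_vsub: "z \<in> V \<Longrightarrow> z' \<in> V \<Longrightarrow> x \<in> V \<Longrightarrow> e (vsub R z z') x = e z x * cnj (e z' x)"
proof -
  assume h: "z \<in> V" "z' \<in> V" "x \<in> V"
  have "dot (vsub R z z') x = dot z x \<ominus> dot z' x"
    using h unfolding dot_def vsub_def by (cases z, cases z', cases x) (simp, algebra)
  then show ?thesis using h dot_closed by (simp add: e_def chi_minus)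
qed

lemma e_vadd: "z \<in> V \<Longrightarrow> z' \<in> V \<Longrightarrow> x \<in> V \<Longrightarrow> e (vadd z z') x = e z x * e z' x"
proof -
  assume h: "z \<in> V" "z' \<in> V" "x \<in> V"
  have "dot (vadd z z') x = dot z x \<oplus> dot z' x"
    using h unfolding dot_def vadd_def by (cases z, cases z', cases x) (simp, algebra)
  then show ?thesis using h dot_closed by (simp add: e_def chi_add)
qed

lemma vsub_V: "z \<in> V \<Longrightarrow> z' \<in> V \<Longrightarrow> vsub R z z' \<in> V"
  by (auto simp: vsub_def)
lemma vadd_V: "z \<in> V \<Longrightarrow> z' \<in> V \<Longrightarrow> vadd z z' \<in> V"
  by (auto simp: vadd_def)

lemma vsub_zero_iff: "z \<in> V \<Longrightarrow> z' \<in> V \<Longrightarrow> vsub R z z' = (\<zero>, \<zero>) \<longleftrightarrow> z = z'"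
  by (cases z, cases z') (auto simp: vsub_def r_right_minus_eq)

lemma finV: "finite V" using fin by simp

lemma orth: "z \<in> V \<Longrightarrow> z' \<in> V \<Longrightarrow> (\<Sum>x\<in>V. e z x * cnj (e z' x)) = (if z = z' then of_nat q ^ 2 else 0)"
proof -
  assume h: "z \<in> V" "z' \<in> V"
  have "(\<Sum>x\<in>V. e z x * cnj (e z' x)) = (\<Sum>x\<in>V. e (vsub R z z') x)"
    using h by (intro sum.cong refl) (simp add: e_vsub)
  also have "\<dots> = (if z = z' then of_nat q ^ 2 else 0)"
    using charsum2[OF vsub_V[OF h]] vsub_zero_iff[OF h] by simp
  finally show ?thesis .
qed

lemma plancherel_c:
  "(\<Sum>x\<in>V. (\<Sum>z\<in>V. c z * e z x) * cnj (\<Sum>z\<in>V. c z * e z x)) = of_nat q ^ 2 * (\<Sum>z\<in>V. c z * cnj (c z))"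
proof -
  have "(\<Sum>x\<in>V. (\<Sum>z\<in>V. c z * e z x) * cnj (\<Sum>z\<in>V. c z * e z x))
      = (\<Sum>x\<in>V. \<Sum>z\<in>V. \<Sum>z'\<in>V. c z * cnj (c z') * (e z x * cnj (e z' x)))"
    by (simp add: sum_product algebra_simps)
  also have "\<dots> = (\<Sum>z\<in>V. \<Sum>x\<in>V. \<Sum>z'\<in>V. c z * cnj (c z') * (e z x * cnj (e z' x)))"
    by (rule sum.swap)
  also have "\<dots> = (\<Sum>z\<in>V. \<Sum>z'\<in>V. \<Sum>x\<in>V. c z * cnj (c z') * (e z x * cnj (e z' x)))"
    by (intro sum.cong refl sum.swap)
  also have "\<dots> = (\<Sum>z\<in>V. \<Sum>z'\<in>V. c z * cnj (c z') * (\<Sum>x\<in>V. e z x * cnj (e z' x)))"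
    by (simp add: sum_distrib_left)
  also have "\<dots> = (\<Sum>z\<in>V. \<Sum>z'\<in>V. c z * cnj (c z') * (if z = z' then of_nat q ^ 2 else 0))"
    by (intro sum.cong refl) (simp add: orth)
  also have "\<dots> = (\<Sum>z\<in>V. c z * cnj (c z) * of_nat q ^ 2)"
    by (intro sum.cong refl) (simp add: if_distrib sum.delta'[OF finV] cong: if_cong)
  also have "\<dots> = of_nat q ^ 2 * (\<Sum>z\<in>V. c z * cnj (c z))"
    by (simp add: sum_distrib_left algebra_simps)
  finally show ?thesis .
qed

lemma plancherel:
  "(\<Sum>x\<in>V. (cmod (\<Sum>z\<in>V. c z * e z x))^2) = real q ^ 2 * (\<Sum>z\<in>V. (cmod (c z))^2)"
proof -
  have "complex_of_real (\<Sum>x\<in>V. (cmod (\<Sum>z\<in>V. c z * e z x))^2)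
      = (\<Sum>x\<in>V. (\<Sum>z\<in>V. c z * e z x) * cnj (\<Sum>z\<in>V. c z * e z x))"
    by (simp only: of_real_sum complex_norm_square)
  also have "\<dots> = of_nat q ^ 2 * (\<Sum>z\<in>V. c z * cnj (c z))" by (rule plancherel_c)
  also have "(\<Sum>z\<in>V. c z * cnj (c z)) = complex_of_real (\<Sum>z\<in>V. (cmod (c z))^2)"
    by (simp only: of_real_sum complex_norm_square)
  also have "of_nat q ^ 2 * complex_of_real (\<Sum>z\<in>V. (cmod (c z))^2) = complex_of_real (real q ^ 2 * (\<Sum>z\<in>V. (cmod (c z))^2))"
    by simp
  finally show ?thesis by (simp only: of_real_eq_iff)
qed

end

lemma sum_fiber_le:
  fixes g :: "'b \<Rightarrow> real"
  assumes A: "finite A" and B: "finite B" and fAB: "f ` A \<subseteq> B"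
    and fib: "\<And>b. b \<in> B \<Longrightarrow> card {a\<in>A. f a = b} \<le> k"
    and g: "\<And>b. b \<in> B \<Longrightarrow> g b \<ge> 0"
  shows "(\<Sum>a\<in>A. g (f a)) \<le> real k * (\<Sum>b\<in>B. g b)"
proof -
  have "(\<Sum>a\<in>A. g (f a)) = (\<Sum>b\<in>f ` A. \<Sum>a\<in>{a\<in>A. f a = b}. g (f a))"
    by (rule sum.image_gen[OF A])
  also have "\<dots> = (\<Sum>b\<in>f ` A. real (card {a\<in>A. f a = b}) * g b)"
    by (intro sum.cong refl) simp
  also have "\<dots> \<le> (\<Sum>b\<in>f ` A. real k * g b)"
    using fAB fib g by (intro sum_mono mult_right_mono) auto
  also have "\<dots> \<le> (\<Sum>b\<in>B. real k * g b)"
    using fAB g B by (intro sum_mono2) auto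
  finally show ?thesis by (simp add: sum_distrib_left)
qed

lemma card_fiber_le:
  assumes A: "finite A" and B: "finite B" and fAB: "f ` A \<subseteq> B"
    and fib: "\<And>b. b \<in> B \<Longrightarrow> card {a\<in>A. f a = b} \<le> k"
  shows "card A \<le> k * card B"
proof -
  have "real (card A) = (\<Sum>a\<in>A. (\<lambda>_. 1::real) (f a))" by simp
  also have "\<dots> \<le> real k * (\<Sum>b\<in>B. 1)" by (rule sum_fiber_le[OF A B fAB fib]) auto
  finally show ?thesis by (simp flip: of_nat_mult)
qed

context fqc begin

definition tr :: "'a mat2 \<Rightarrow> 'a \<times> 'a \<Rightarrow> 'a \<times> 'a" where
  "tr \<theta> m = (case \<theta> of (a, b, c, d) \<Rightarrow> (a \<otimes> fst m \<oplus> c \<otimes> snd m, b \<otimes> fst m \<oplus> d \<otimes> snd m))"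

definition nrm :: "'a \<times> 'a \<Rightarrow> 'a" where "nrm m = fst m \<otimes> fst m \<oplus> snd m \<otimes> snd m"

lemma nrm_nz: "m \<in> V \<Longrightarrow> m \<noteq> (\<zero>, \<zero>) \<Longrightarrow> nrm m \<noteq> \<zero>"
  using norm_zero by (cases m) (auto simp: nrm_def)

lemma sq_eq:
  assumes x: "x \<in> carrier R" and y: "y \<in> carrier R" and h: "x \<otimes> x = y \<otimes> y"
  shows "x = y \<or> x = \<ominus> y"
proof -
  have "(x \<ominus> y) \<otimes> (x \<oplus> y) = x \<otimes> x \<ominus> y \<otimes> y" using x y by algebra
  also have "\<dots> = \<zero>" using h y by (simp add: r_neg minus_eq)
  finally have "x \<ominus> y = \<zero> \<or> x \<oplus> y = \<zero>" using x y integral by blast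
  then show ?thesis using x y
    by (metis a_minus_def add.inv_closed add.inv_comm add.l_cancel_one' minus_equality r_right_minus_eq)
qed

lemma orth_form:
  assumes th: "(a, b, c, d) \<in> orth2 R"
  shows "(b = \<ominus> c \<and> d = a) \<or> (b = c \<and> d = \<ominus> a)"
proof -
  have cr: "a \<in> carrier R" "b \<in> carrier R" "c \<in> carrier R" "d \<in> carrier R"
    and h1: "a \<otimes> a \<oplus> c \<otimes> c = \<one>" and h2: "b \<otimes> b \<oplus> d \<otimes> d = \<one>"
    and h3: "a \<otimes> b \<oplus> c \<otimes> d = \<zero>" using th by (auto simp: orth2_def)
  define k where "k = a \<otimes> d \<ominus> b \<otimes> c"
  have kc: "k \<in> carrier R" using cr by (simp add: k_def)
  have "k \<otimes> a = d \<otimes> (a \<otimes> a \<oplus> c \<otimes> c) \<ominus> c \<otimes> (a \<otimes> b \<oplus> c \<otimes> d)" using cr unfolding k_def by algebra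
  then have ka: "k \<otimes> a = d" using h1 h3 cr by (simp add: minus_eq)
  have "k \<otimes> c = a \<otimes> (a \<otimes> b \<oplus> c \<otimes> d) \<ominus> b \<otimes> (a \<otimes> a \<oplus> c \<otimes> c)" using cr unfolding k_def by algebra
  then have kc': "k \<otimes> c = \<ominus> b" using h1 h3 cr by (simp add: minus_eq)
  have "b \<otimes> b \<oplus> d \<otimes> d = (k \<otimes> k) \<otimes> (a \<otimes> a \<oplus> c \<otimes> c)"
  proof -
    have "b = \<ominus> (k \<otimes> c)" using kc' cr kc by simp
    then have "b \<otimes> b \<oplus> d \<otimes> d = (\<ominus> (k \<otimes> c)) \<otimes> (\<ominus> (k \<otimes> c)) \<oplus> (k \<otimes> a) \<otimes> (k \<otimes> a)" using ka by simp
    also have "\<dots> = (k \<otimes> k) \<otimes> (a \<otimes> a \<oplus> c \<otimes> c)" using cr kc by algebra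
    finally show ?thesis .
  qed
  then have "\<one> = (k \<otimes> k) \<otimes> \<one>" by (simp only: h1 h2)
  moreover have "(k \<otimes> k) \<otimes> \<one> = k \<otimes> k" by (rule r_one) (simp add: kc)
  ultimately have "\<one> = k \<otimes> k" by (rule trans)
  then have kk: "k \<otimes> k = \<one> \<otimes> \<one>" by (metis l_one one_closed)
  then have "k = \<one> \<or> k = \<ominus> \<one>" using sq_eq[OF kc] by simp
  then show ?thesis
  proof
    assume "k = \<one>" then show ?thesis using ka kc' cr by simp
  next
    assume "k = \<ominus> \<one>"
    then have "d = \<ominus> a" "\<ominus> b = \<ominus> c" using ka kc' cr by (simp_all add: l_minus)
    moreover have "b = c" using \<open>\<ominus> b = \<ominus> c\<close> cr by (metis minus_minus)
    ultimately show ?thesis by simp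
  qed
qed

lemma orth_carrier: "(a, b, c, d) \<in> orth2 R \<Longrightarrow> a \<in> carrier R \<and> b \<in> carrier R \<and> c \<in> carrier R \<and> d \<in> carrier R"
  by (auto simp: orth2_def)

lemma orth_sq: "(a, b, c, d) \<in> orth2 R \<Longrightarrow> a \<otimes> a \<oplus> c \<otimes> c = \<one>"
  by (auto simp: orth2_def)

lemma tr_V: "\<theta> \<in> orth2 R \<Longrightarrow> m \<in> V \<Longrightarrow> tr \<theta> m \<in> V"
  by (cases \<theta>) (auto simp: tr_def orth2_def)

lemma tr_zero: "\<theta> \<in> orth2 R \<Longrightarrow> tr \<theta> (\<zero>, \<zero>) = (\<zero>, \<zero>)"
  by (cases \<theta>) (auto simp: tr_def orth2_def)

lemma dot_tr: "\<theta> \<in> orth2 R \<Longrightarrow> m \<in> V \<Longrightarrow> v \<in> V \<Longrightarrow> dot m (mat2_apply R \<theta> v) = dot (tr \<theta> m) v"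
proof -
  assume h: "\<theta> \<in> orth2 R" "m \<in> V" "v \<in> V"
  obtain a b c d where th: "\<theta> = (a, b, c, d)" by (cases \<theta>) auto
  obtain m1 m2 where m: "m = (m1, m2)" by (cases m)
  obtain v1 v2 where v: "v = (v1, v2)" by (cases v)
  show ?thesis using h orth_carrier[of a b c d] unfolding th m v dot_def tr_def mat2_apply_def
    by simp algebra
qed

lemma id1: "a \<in> carrier R \<Longrightarrow> c \<in> carrier R \<Longrightarrow> m1 \<in> carrier R \<Longrightarrow> m2 \<in> carrier R \<Longrightarrow>
  (a \<otimes> m1 \<oplus> c \<otimes> m2) \<otimes> (a \<otimes> m1 \<oplus> c \<otimes> m2) \<oplus> (\<ominus> c \<otimes> m1 \<oplus> a \<otimes> m2) \<otimes> (\<ominus> c \<otimes> m1 \<oplus> a \<otimes> m2)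
  = (a \<otimes> a \<oplus> c \<otimes> c) \<otimes> (m1 \<otimes> m1 \<oplus> m2 \<otimes> m2)"
  by algebra

lemma id2: "a \<in> carrier R \<Longrightarrow> c \<in> carrier R \<Longrightarrow> m1 \<in> carrier R \<Longrightarrow> m2 \<in> carrier R \<Longrightarrow>
  (a \<otimes> m1 \<oplus> c \<otimes> m2) \<otimes> (a \<otimes> m1 \<oplus> c \<otimes> m2) \<oplus> (c \<otimes> m1 \<oplus> \<ominus> a \<otimes> m2) \<otimes> (c \<otimes> m1 \<oplus> \<ominus> a \<otimes> m2)
  = (a \<otimes> a \<oplus> c \<otimes> c) \<otimes> (m1 \<otimes> m1 \<oplus> m2 \<otimes> m2)"
  by algebra

lemma nrm_tr: "\<theta> \<in> orth2 R \<Longrightarrow> m \<in> V \<Longrightarrow> nrm (tr \<theta> m) = nrm m"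
proof -
  assume h: "\<theta> \<in> orth2 R" "m \<in> V"
  obtain a b c d where th: "\<theta> = (a, b, c, d)" by (cases \<theta>) auto
  obtain m1 m2 where m: "m = (m1, m2)" by (cases m)
  have cr: "a \<in> carrier R" "b \<in> carrier R" "c \<in> carrier R" "d \<in> carrier R" "m1 \<in> carrier R" "m2 \<in> carrier R"
    using h orth_carrier[of a b c d] by (auto simp: th m)
  have s: "a \<otimes> a \<oplus> c \<otimes> c = \<one>" using h orth_sq th by simp
  have nm: "nrm m = m1 \<otimes> m1 \<oplus> m2 \<otimes> m2" by (simp add: m nrm_def)
  from orth_form[of a b c d] h th consider "b = \<ominus> c" "d = a" | "b = c" "d = \<ominus> a" by auto
  then show ?thesis
  proof cases
    case 1
    have "nrm (tr \<theta> m) = (a \<otimes> m1 \<oplus> c \<otimes> m2) \<otimes> (a \<otimes> m1 \<oplus> c \<otimes> m2) \<oplus> (\<ominus> c \<otimes> m1 \<oplus> a \<otimes> m2) \<otimes> (\<ominus> c \<otimes> m1 \<oplus> a \<otimes> m2)"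
      unfolding th m tr_def nrm_def 1 by simp
    also have "\<dots> = (a \<otimes> a \<oplus> c \<otimes> c) \<otimes> (m1 \<otimes> m1 \<oplus> m2 \<otimes> m2)" using id1 cr by simp
    finally show ?thesis using s nm cr by simp
  next
    case 2
    have "nrm (tr \<theta> m) = (a \<otimes> m1 \<oplus> c \<otimes> m2) \<otimes> (a \<otimes> m1 \<oplus> c \<otimes> m2) \<oplus> (c \<otimes> m1 \<oplus> \<ominus> a \<otimes> m2) \<otimes> (c \<otimes> m1 \<oplus> \<ominus> a \<otimes> m2)"
      unfolding th m tr_def nrm_def 2 by simp
    also have "\<dots> = (a \<otimes> a \<oplus> c \<otimes> c) \<otimes> (m1 \<otimes> m1 \<oplus> m2 \<otimes> m2)" using id2 cr by simp
    finally show ?thesis using s nm cr by simp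
  qed
qed

lemma cancel_N:
  assumes al: "al \<in> carrier R" and N: "N \<in> carrier R" "N \<noteq> \<zero>"
    and h: "al \<otimes> N = m1 \<otimes> (X \<ominus> X) \<oplus> m2 \<otimes> (Y \<ominus> Y)" and cr: "m1 \<in> carrier R" "m2 \<in> carrier R" "X \<in> carrier R" "Y \<in> carrier R"
  shows "al = \<zero>"
proof -
  have "al \<otimes> N = \<zero>" using h cr by (simp add: r_neg minus_eq)
  then show ?thesis using al N integral by blast
qed

lemma diff_zero: "x \<in> carrier R \<Longrightarrow> y \<in> carrier R \<Longrightarrow> x \<ominus> y = \<zero> \<Longrightarrow> x = y"
  by (simp add: r_right_minus_eq)

lemma solve1:
  assumes cr: "a \<in> carrier R" "c \<in> carrier R" "a' \<in> carrier R" "c' \<in> carrier R" "m1 \<in> carrier R" "m2 \<in> carrier R"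
    and N: "m1 \<otimes> m1 \<oplus> m2 \<otimes> m2 \<noteq> \<zero>"
    and e1: "a \<otimes> m1 \<oplus> c \<otimes> m2 = a' \<otimes> m1 \<oplus> c' \<otimes> m2"
    and e2: "\<ominus> c \<otimes> m1 \<oplus> a \<otimes> m2 = \<ominus> c' \<otimes> m1 \<oplus> a' \<otimes> m2"
  shows "a = a' \<and> c = c'"
proof -
  let ?X = "a \<otimes> m1 \<oplus> c \<otimes> m2" and ?X' = "a' \<otimes> m1 \<oplus> c' \<otimes> m2"
  let ?Y = "\<ominus> c \<otimes> m1 \<oplus> a \<otimes> m2" and ?Y' = "\<ominus> c' \<otimes> m1 \<oplus> a' \<otimes> m2"
  have i1: "(a \<ominus> a') \<otimes> (m1 \<otimes> m1 \<oplus> m2 \<otimes> m2) = m1 \<otimes> (?X \<ominus> ?X') \<oplus> m2 \<otimes> (?Y \<ominus> ?Y')"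
    using cr by algebra
  have i2: "(c \<ominus> c') \<otimes> (m1 \<otimes> m1 \<oplus> m2 \<otimes> m2) = m2 \<otimes> (?X \<ominus> ?X') \<oplus> (\<ominus> m1) \<otimes> (?Y \<ominus> ?Y')"
    using cr by algebra
  have "a \<ominus> a' = \<zero>" using cancel_N[of "a \<ominus> a'" "m1 \<otimes> m1 \<oplus> m2 \<otimes> m2" m1 ?X' m2 ?Y'] i1 cr N e1 e2 by simp
  moreover have "c \<ominus> c' = \<zero>" using cancel_N[of "c \<ominus> c'" "m1 \<otimes> m1 \<oplus> m2 \<otimes> m2" m2 ?X' "\<ominus> m1" ?Y'] i2 cr N e1 e2 by simp
  ultimately show ?thesis using cr diff_zero by blast
qed

lemma solve2:
  assumes cr: "a \<in> carrier R" "c \<in> carrier R" "a' \<in> carrier R" "c' \<in> carrier R" "m1 \<in> carrier R" "m2 \<in> carrier R"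
    and N: "m1 \<otimes> m1 \<oplus> m2 \<otimes> m2 \<noteq> \<zero>"
    and e1: "a \<otimes> m1 \<oplus> c \<otimes> m2 = a' \<otimes> m1 \<oplus> c' \<otimes> m2"
    and e2: "c \<otimes> m1 \<oplus> \<ominus> a \<otimes> m2 = c' \<otimes> m1 \<oplus> \<ominus> a' \<otimes> m2"
  shows "a = a' \<and> c = c'"
proof -
  let ?X = "a \<otimes> m1 \<oplus> c \<otimes> m2" and ?X' = "a' \<otimes> m1 \<oplus> c' \<otimes> m2"
  let ?Y = "c \<otimes> m1 \<oplus> \<ominus> a \<otimes> m2" and ?Y' = "c' \<otimes> m1 \<oplus> \<ominus> a' \<otimes> m2"
  have i1: "(a \<ominus> a') \<otimes> (m1 \<otimes> m1 \<oplus> m2 \<otimes> m2) = m1 \<otimes> (?X \<ominus> ?X') \<oplus> (\<ominus> m2) \<otimes> (?Y \<ominus> ?Y')"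
    using cr by algebra
  have i2: "(c \<ominus> c') \<otimes> (m1 \<otimes> m1 \<oplus> m2 \<otimes> m2) = m2 \<otimes> (?X \<ominus> ?X') \<oplus> m1 \<otimes> (?Y \<ominus> ?Y')"
    using cr by algebra
  have "a \<ominus> a' = \<zero>" using cancel_N[of "a \<ominus> a'" "m1 \<otimes> m1 \<oplus> m2 \<otimes> m2" m1 ?X' "\<ominus> m2" ?Y'] i1 cr N e1 e2 by simp
  moreover have "c \<ominus> c' = \<zero>" using cancel_N[of "c \<ominus> c'" "m1 \<otimes> m1 \<oplus> m2 \<otimes> m2" m2 ?X' m1 ?Y'] i2 cr N e1 e2 by simp
  ultimately show ?thesis using cr diff_zero by blast
qed

definition otyp :: "'a mat2 \<Rightarrow> bool" where "otyp \<theta> = (case \<theta> of (a, b, c, d) \<Rightarrow> b = \<ominus> c \<and> d = a)"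

lemma fiber_le2:
  assumes m: "m \<in> V" "m \<noteq> (\<zero>, \<zero>)"
  shows "card {\<theta> \<in> orth2 R. tr \<theta> m = m'} \<le> 2"
proof -
  let ?F = "{\<theta> \<in> orth2 R. tr \<theta> m = m'}"
  obtain m1 m2 where mm: "m = (m1, m2)" by (cases m)
  have mc: "m1 \<in> carrier R" "m2 \<in> carrier R" using m mm by auto
  have N: "m1 \<otimes> m1 \<oplus> m2 \<otimes> m2 \<noteq> \<zero>" using nrm_nz[OF m] mm by (simp add: nrm_def)
  have "inj_on otyp ?F"
  proof (rule inj_onI)
    fix th th' assume th: "th \<in> ?F" and th': "th' \<in> ?F" and ty: "otyp th = otyp th'"
    obtain a b c d where t: "th = (a, b, c, d)" by (cases th) auto
    obtain a' b' c' d' where t': "th' = (a', b', c', d')" by (cases th') auto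
    have o: "(a, b, c, d) \<in> orth2 R" "(a', b', c', d') \<in> orth2 R" using th th' t t' by auto
    have cr: "a \<in> carrier R" "b \<in> carrier R" "c \<in> carrier R" "d \<in> carrier R"
      "a' \<in> carrier R" "b' \<in> carrier R" "c' \<in> carrier R" "d' \<in> carrier R"
      using orth_carrier[OF o(1)] orth_carrier[OF o(2)] by auto
    have eq: "tr (a, b, c, d) m = tr (a', b', c', d') m" using th th' t t' by simp
    then have e1: "a \<otimes> m1 \<oplus> c \<otimes> m2 = a' \<otimes> m1 \<oplus> c' \<otimes> m2"
      and e2: "b \<otimes> m1 \<oplus> d \<otimes> m2 = b' \<otimes> m1 \<oplus> d' \<otimes> m2" by (simp_all add: tr_def mm)
    show "th = th'"
    proof (cases "otyp th")
      case True
      then have "b = \<ominus> c" "d = a" "b' = \<ominus> c'" "d' = a'" using ty by (simp_all add: otyp_def t t')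
      then show ?thesis using solve1[OF cr(1,3,5,7) mc N e1] e2 t t' by simp
    next
      case False
      then have "\<not> (b = \<ominus> c \<and> d = a)" "\<not> (b' = \<ominus> c' \<and> d' = a')" using ty by (auto simp: otyp_def t t')
      then have "b = c" "d = \<ominus> a" "b' = c'" "d' = \<ominus> a'" using orth_form[OF o(1)] orth_form[OF o(2)] by auto
      then show ?thesis using solve2[OF cr(1,3,5,7) mc N e1] e2 t t' by simp
    qed
  qed
  then have "card ?F \<le> card (UNIV :: bool set)" by (rule card_inj_on_le) auto
  then show ?thesis by simp
qed

lemma fin_orth: "finite (orth2 R)"
proof -
  have "orth2 R \<subseteq> carrier R \<times> carrier R \<times> carrier R \<times> carrier R" by (auto simp: orth2_def)
  then show ?thesis by (rule finite_subset) (simp add: fin)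
qed

lemma circle_card: "card {x \<in> V. nrm x = \<one>} \<le> 2 * q"
proof (rule card_fiber_le[where f = fst])
  show "finite {x \<in> V. nrm x = \<one>}" using finV by simp
  show "finite (carrier R)" by (rule fin)
  show "fst ` {x \<in> V. nrm x = \<one>} \<subseteq> carrier R" by auto
  fix a assume a: "a \<in> carrier R"
  let ?F = "{x' \<in> {x \<in> V. nrm x = \<one>}. fst x' = a}"
  show "card ?F \<le> 2"
  proof (cases "?F = {}")
    case True show ?thesis unfolding True by simp
  next
    case False
    then obtain x0 where x0: "x0 \<in> ?F" by blast
    have "?F \<subseteq> {(a, snd x0), (a, \<ominus> snd x0)}"
    proof
      fix x assume x: "x \<in> ?F"
      have yc: "snd x \<in> carrier R" "snd x0 \<in> carrier R" using x x0 by auto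
      have "snd x \<otimes> snd x = (a \<otimes> a \<oplus> snd x \<otimes> snd x) \<ominus> a \<otimes> a" using a yc by algebra
      also have "a \<otimes> a \<oplus> snd x \<otimes> snd x = \<one>" using x by (cases x) (auto simp: nrm_def)
      also have "\<one> = a \<otimes> a \<oplus> snd x0 \<otimes> snd x0" using x0 by (cases x0) (auto simp: nrm_def)
      also have "(a \<otimes> a \<oplus> snd x0 \<otimes> snd x0) \<ominus> a \<otimes> a = snd x0 \<otimes> snd x0" using a yc by algebra
      finally have "snd x = snd x0 \<or> snd x = \<ominus> snd x0" using sq_eq yc by blast
      then show "x \<in> {(a, snd x0), (a, \<ominus> snd x0)}" using x by (cases x) auto
    qed
    then have "card ?F \<le> card {(a, snd x0), (a, \<ominus> snd x0)}" by (rule card_mono[rotated]) simp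
    also have "\<dots> \<le> 2" by (simp add: card_insert_le_m1)
    finally show ?thesis .
  qed
qed

lemma card_orth: "card (orth2 R) \<le> 4 * q"
proof -
  have m: "(\<one>, \<zero>) \<in> V" "(\<one>, \<zero>) \<noteq> (\<zero>, \<zero>)" by auto
  have "card (orth2 R) \<le> 2 * card {x \<in> V. nrm x = \<one>}"
  proof (rule card_fiber_le[where f = "\<lambda>\<theta>. tr \<theta> (\<one>, \<zero>)"])
    show "finite (orth2 R)" by (rule fin_orth)
    show "finite {x \<in> V. nrm x = \<one>}" using finV by simp
    show "(\<lambda>\<theta>. tr \<theta> (\<one>, \<zero>)) ` orth2 R \<subseteq> {x \<in> V. nrm x = \<one>}"
    proof (rule image_subsetI)
      fix th assume th: "th \<in> orth2 R"
      have "nrm (tr th (\<one>, \<zero>)) = \<one>" using nrm_tr[OF th m(1)] by (simp add: nrm_def)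
      then show "tr th (\<one>, \<zero>) \<in> {x \<in> V. nrm x = \<one>}" using tr_V[OF th m(1)] by simp
    qed
    show "card {a \<in> orth2 R. tr a (\<one>, \<zero>) = b} \<le> 2" for b by (rule fiber_le2[OF m])
  qed
  also have "\<dots> \<le> 2 * (2 * q)" using circle_card by simp
  finally show ?thesis by simp
qed

lemma two_pts:
  assumes cr: "z1 \<in> carrier R" "z2 \<in> carrier R" "x0 \<in> carrier R" "y0 \<in> carrier R" "x \<in> carrier R" "y \<in> carrier R"
    and N: "z1 \<otimes> z1 \<oplus> z2 \<otimes> z2 \<noteq> \<zero>"
    and h0: "x0 \<otimes> x0 \<oplus> y0 \<otimes> y0 = t" and h0': "(z1 \<ominus> x0) \<otimes> (z1 \<ominus> x0) \<oplus> (z2 \<ominus> y0) \<otimes> (z2 \<ominus> y0) = t"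
    and h: "x \<otimes> x \<oplus> y \<otimes> y = t" and h': "(z1 \<ominus> x) \<otimes> (z1 \<ominus> x) \<oplus> (z2 \<ominus> y) \<otimes> (z2 \<ominus> y) = t"
  shows "(x = x0 \<and> y = y0) \<or>
    (let mu = \<ominus> ((\<one> \<oplus> \<one>) \<otimes> (x0 \<otimes> (\<ominus> z2) \<oplus> y0 \<otimes> z1)) \<otimes> inv (z1 \<otimes> z1 \<oplus> z2 \<otimes> z2)
     in x = x0 \<oplus> mu \<otimes> (\<ominus> z2) \<and> y = y0 \<oplus> mu \<otimes> z1)"
proof -
  define Nn where "Nn = z1 \<otimes> z1 \<oplus> z2 \<otimes> z2"
  have Nc: "Nn \<in> carrier R" "Nn \<noteq> \<zero>" using cr N by (simp_all add: Nn_def)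
  have iN: "inv Nn \<in> carrier R" "Nn \<otimes> inv Nn = \<one>" using Nc by (simp_all add: field_Units)
  have tc: "t \<in> carrier R" using h0[symmetric] cr by simp
  define L where "L = z1 \<otimes> (x \<ominus> x0) \<oplus> z2 \<otimes> (y \<ominus> y0)"
  have Lc: "L \<in> carrier R" using cr by (simp add: L_def)
  have "(\<one> \<oplus> \<one>) \<otimes> L = (((z1 \<ominus> x0) \<otimes> (z1 \<ominus> x0) \<oplus> (z2 \<ominus> y0) \<otimes> (z2 \<ominus> y0)) \<ominus> (x0 \<otimes> x0 \<oplus> y0 \<otimes> y0))
      \<ominus> (((z1 \<ominus> x) \<otimes> (z1 \<ominus> x) \<oplus> (z2 \<ominus> y) \<otimes> (z2 \<ominus> y)) \<ominus> (x \<otimes> x \<oplus> y \<otimes> y))"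
    using cr unfolding L_def by algebra
  also have "\<dots> = \<zero>" unfolding h0 h0' h h' using tc by (simp add: a_minus_def r_neg)
  finally have "L = \<zero>" using two_nz Lc integral[of "\<one> \<oplus> \<one>" L] by simp
  define W where "W = \<ominus> z2 \<otimes> (x \<ominus> x0) \<oplus> z1 \<otimes> (y \<ominus> y0)"
  have Wc: "W \<in> carrier R" using cr by (simp add: W_def)
  define mu where "mu = W \<otimes> inv Nn"
  have muc: "mu \<in> carrier R" using Wc iN by (simp add: mu_def)
  have dx: "(x \<ominus> x0) \<otimes> Nn = z1 \<otimes> L \<oplus> (\<ominus> z2) \<otimes> W" using cr unfolding L_def W_def Nn_def by algebra
  have dy: "(y \<ominus> y0) \<otimes> Nn = z2 \<otimes> L \<oplus> z1 \<otimes> W" using cr unfolding L_def W_def Nn_def by algebra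
  have inv_step: "u \<in> carrier R \<Longrightarrow> v \<in> carrier R \<Longrightarrow> u \<otimes> Nn = v \<otimes> W \<Longrightarrow> u = mu \<otimes> v" for u v
  proof -
    assume uv: "u \<in> carrier R" "v \<in> carrier R" "u \<otimes> Nn = v \<otimes> W"
    have "u = (u \<otimes> Nn) \<otimes> inv Nn" using uv(1) iN Nc by (simp add: m_assoc)
    also have "\<dots> = (v \<otimes> W) \<otimes> inv Nn" using uv by simp
    also have "\<dots> = mu \<otimes> v" using uv Wc iN unfolding mu_def by algebra
    finally show ?thesis .
  qed
  have "x \<ominus> x0 = mu \<otimes> (\<ominus> z2)" using inv_step[of "x \<ominus> x0" "\<ominus> z2"] dx \<open>L = \<zero>\<close> cr Wc by simp
  then have xe: "x = x0 \<oplus> mu \<otimes> (\<ominus> z2)" using cr muc by (metis a_minus_def add.inv_closed add.m_lcomm m_closed minus_add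
      r_neg r_zero add.m_comm minus_minus a_assoc)
  have "y \<ominus> y0 = mu \<otimes> z1" using inv_step[of "y \<ominus> y0" z1] dy \<open>L = \<zero>\<close> cr Wc by simp
  then have ye: "y = y0 \<oplus> mu \<otimes> z1" using cr muc by (metis a_minus_def add.inv_closed add.m_lcomm m_closed minus_add
      r_neg r_zero add.m_comm minus_minus a_assoc)
  define K where "K = (\<one> \<oplus> \<one>) \<otimes> (x0 \<otimes> (\<ominus> z2) \<oplus> y0 \<otimes> z1)"
  have Kc: "K \<in> carrier R" using cr by (simp add: K_def)
  have "x \<otimes> x \<oplus> y \<otimes> y = (x0 \<otimes> x0 \<oplus> y0 \<otimes> y0) \<oplus> mu \<otimes> (K \<oplus> mu \<otimes> Nn)"
    unfolding xe ye K_def Nn_def using cr muc by algebra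
  then have "t = t \<oplus> mu \<otimes> (K \<oplus> mu \<otimes> Nn)" using h h0 by simp
  then have "mu \<otimes> (K \<oplus> mu \<otimes> Nn) = \<zero>" using tc muc Kc Nc by (metis add.l_cancel_one' m_closed add.m_closed)
  then have "mu = \<zero> \<or> K \<oplus> mu \<otimes> Nn = \<zero>" using integral muc Kc Nc by blast
  then show ?thesis
  proof
    assume "mu = \<zero>" then show ?thesis using xe ye cr by simp
  next
    assume "K \<oplus> mu \<otimes> Nn = \<zero>"
    then have "mu \<otimes> Nn = \<ominus> K" using Kc muc Nc by (metis add.inv_equality add.m_comm m_closed)
    then have "mu = \<ominus> K \<otimes> inv Nn" using iN Nc muc Kc by (metis m_assoc r_one)
    then show ?thesis using xe ye by (simp add: K_def Nn_def Let_def)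
  qed
qed

lemma nrm_vsub: "z \<in> V \<Longrightarrow> m \<in> V \<Longrightarrow> nrm (vsub R z m) = (fst z \<ominus> fst m) \<otimes> (fst z \<ominus> fst m) \<oplus> (snd z \<ominus> snd m) \<otimes> (snd z \<ominus> snd m)"
  by (simp add: nrm_def vsub_def)

lemma circ_line:
  assumes z: "z \<in> V" "z \<noteq> (\<zero>, \<zero>)"
  shows "card {m \<in> V. nrm m = t \<and> nrm (vsub R z m) = t} \<le> 2"
proof (cases "{m \<in> V. nrm m = t \<and> nrm (vsub R z m) = t} = {}")
  case True show ?thesis unfolding True by simp
next
  case False
  let ?X = "{m \<in> V. nrm m = t \<and> nrm (vsub R z m) = t}"
  obtain m0 where m0: "m0 \<in> ?X" using False by blast
  obtain z1 z2 where zz: "z = (z1, z2)" by (cases z)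
  obtain x0 y0 where mm: "m0 = (x0, y0)" by (cases m0)
  have N: "z1 \<otimes> z1 \<oplus> z2 \<otimes> z2 \<noteq> \<zero>" using nrm_nz[OF z] zz by (simp add: nrm_def)
  define mu where "mu = \<ominus> ((\<one> \<oplus> \<one>) \<otimes> (x0 \<otimes> (\<ominus> z2) \<oplus> y0 \<otimes> z1)) \<otimes> inv (z1 \<otimes> z1 \<oplus> z2 \<otimes> z2)"
  have "?X \<subseteq> {m0, (x0 \<oplus> mu \<otimes> (\<ominus> z2), y0 \<oplus> mu \<otimes> z1)}"
  proof
    fix m assume m: "m \<in> ?X"
    obtain x y where xy: "m = (x, y)" by (cases m)
    have "(x = x0 \<and> y = y0) \<or> (x = x0 \<oplus> mu \<otimes> (\<ominus> z2) \<and> y = y0 \<oplus> mu \<otimes> z1)"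
      using two_pts[of z1 z2 x0 y0 x y t] m m0 z zz mm xy N unfolding mu_def
      by (simp add: nrm_def vsub_def Let_def)
    then show "m \<in> {m0, (x0 \<oplus> mu \<otimes> (\<ominus> z2), y0 \<oplus> mu \<otimes> z1)}" using xy mm by auto
  qed
  then have "card ?X \<le> card {m0, (x0 \<oplus> mu \<otimes> (\<ominus> z2), y0 \<oplus> mu \<otimes> z1)}" by (rule card_mono[rotated]) simp
  also have "\<dots> \<le> 2" by (simp add: card_insert_le_m1)
  finally show ?thesis .
qed

end

lemma CS_sum:
  fixes a b :: "'c \<Rightarrow> real"
  shows "(\<Sum>i\<in>I. a i * b i)\<^sup>2 \<le> (\<Sum>i\<in>I. (a i)\<^sup>2) * (\<Sum>i\<in>I. (b i)\<^sup>2)"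
proof (cases "(\<Sum>i\<in>I. (b i)\<^sup>2) > 0")
  case False
  then consider "\<And>i. i\<in>I \<Longrightarrow> b i = 0" | "infinite I"
    by (metis (mono_tags, lifting) sum_pos2 zero_le_power2 zero_less_power2)
  thus ?thesis
    by fastforce
next
  case True
  define r where "r \<equiv> (\<Sum>i\<in>I. a i * b i) / (\<Sum>i\<in>I. (b i)\<^sup>2)"
  have "0 \<le> (\<Sum>i\<in>I. (a i - r * b i)\<^sup>2)"
    by (simp add: sum_nonneg)
  also have "... = (\<Sum>i\<in>I. (a i)\<^sup>2) - 2 * r * (\<Sum>i\<in>I. a i * b i) + r\<^sup>2 * (\<Sum>i\<in>I. (b i)\<^sup>2)"
    by (simp add: algebra_simps power2_eq_square sum_distrib_left flip: sum.distrib)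
  also have "\<dots> = (\<Sum>i\<in>I. (a i)\<^sup>2) - ((\<Sum>i\<in>I. a i * b i))\<^sup>2 / (\<Sum>i\<in>I. (b i)\<^sup>2)"
    by (simp add: r_def power2_eq_square)
  finally have "0 \<le> (\<Sum>i\<in>I. (a i)\<^sup>2) - ((\<Sum>i\<in>I. a i * b i))\<^sup>2 / (\<Sum>i\<in>I. (b i)\<^sup>2)" .
  hence "((\<Sum>i\<in>I. a i * b i))\<^sup>2 / (\<Sum>i\<in>I. (b i)\<^sup>2) \<le> (\<Sum>i\<in>I. (a i)\<^sup>2)"
    by (simp add: le_diff_eq)
  thus "((\<Sum>i\<in>I. a i * b i))\<^sup>2 \<le> (\<Sum>i\<in>I. (a i)\<^sup>2) * (\<Sum>i\<in>I. (b i)\<^sup>2)"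
    by (simp add: pos_divide_le_eq True)
qed

lemma CS_card:
  fixes f :: "'c \<Rightarrow> real"
  shows "(\<Sum>i\<in>I. f i)\<^sup>2 \<le> real (card I) * (\<Sum>i\<in>I. (f i)\<^sup>2)"
  using CS_sum[of "\<lambda>_. 1" f I] by simp

context fqc begin

definition A :: "('a \<times> 'a) set \<Rightarrow> 'a \<times> 'a \<Rightarrow> complex" where "A E m = (\<Sum>u\<in>E. e m u)"

lemma A_plancherel: assumes E: "E \<subseteq> V"
  shows "(\<Sum>m\<in>V. (cmod (A E m))\<^sup>2) = real q ^ 2 * real (card E)"
proof -
  let ?c = "\<lambda>z. if z \<in> E then (1::complex) else 0"
  have "A E m = (\<Sum>z\<in>V. ?c z * e z m)" if m: "m \<in> V" for m
  proof -
    have "(\<Sum>z\<in>V. ?c z * e z m) = (\<Sum>z\<in>V. if z \<in> E then e z m else 0)"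
      by (intro sum.cong) auto
    also have "\<dots> = (\<Sum>z\<in>V \<inter> E. e z m)" by (rule sum.inter_restrict[OF finV, symmetric])
    also have "V \<inter> E = E" using E by blast
    also have "(\<Sum>z\<in>E. e z m) = A E m" unfolding A_def using E m e_sym by (intro sum.cong) auto
    finally show ?thesis by simp
  qed
  then have "(\<Sum>m\<in>V. (cmod (A E m))\<^sup>2) = (\<Sum>m\<in>V. (cmod (\<Sum>z\<in>V. ?c z * e z m))\<^sup>2)" by simp
  also have "\<dots> = real q ^ 2 * (\<Sum>z\<in>V. (cmod (?c z))\<^sup>2)" by (rule plancherel)
  also have "(\<Sum>z\<in>V. (cmod (?c z))\<^sup>2) = (\<Sum>z\<in>V. if z \<in> E then 1 else 0)" by (intro sum.cong) auto
  also have "\<dots> = real (card (V \<inter> E))" by (simp add: sum.inter_restrict[OF finV, symmetric])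
  also have "V \<inter> E = E" using E by blast
  finally show ?thesis .
qed

lemma vadd_eq: "m \<in> V \<Longrightarrow> m' \<in> V \<Longrightarrow> vadd m m' = z \<Longrightarrow> m' = vsub R z m"
proof -
  assume h: "m \<in> V" "m' \<in> V" "vadd m m' = z"
  obtain a b where m: "m = (a, b)" by (cases m)
  obtain c d where m': "m' = (c, d)" by (cases m')
  have cr: "a \<in> carrier R" "b \<in> carrier R" "c \<in> carrier R" "d \<in> carrier R" using h m m' by auto
  have "c = (a \<oplus> c) \<ominus> a" "d = (b \<oplus> d) \<ominus> b" using cr by algebra+
  then show ?thesis using h(3) m m' by (auto simp: vadd_def vsub_def)
qed

lemma vadd_comm: "m \<in> V \<Longrightarrow> m' \<in> V \<Longrightarrow> vadd m m' = vadd m' m"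
  by (auto simp: vadd_def a_comm)

definition Zs :: "('a \<times> 'a) set \<Rightarrow> 'a \<times> 'a \<Rightarrow> (('a \<times> 'a) \<times> ('a \<times> 'a)) set" where
  "Zs S z = {P \<in> S \<times> S. vadd (fst P) (snd P) = z}"

lemma G_sq:
  fixes g :: "'a \<times> 'a \<Rightarrow> complex"
  assumes S: "S \<subseteq> V" and x: "x \<in> V"
  shows "(\<Sum>m\<in>S. g m * e m x) * (\<Sum>m\<in>S. g m * e m x)
    = (\<Sum>z\<in>V. (\<Sum>P\<in>Zs S z. g (fst P) * g (snd P)) * e z x)"
proof -
  have fS: "finite S" using S finV finite_subset by blast
  have "(\<Sum>m\<in>S. g m * e m x) * (\<Sum>m\<in>S. g m * e m x) = (\<Sum>m\<in>S. \<Sum>m'\<in>S. g m * g m' * (e m x * e m' x))"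
    by (simp add: sum_product algebra_simps)
  also have "\<dots> = (\<Sum>m\<in>S. \<Sum>m'\<in>S. g m * g m' * e (vadd m m') x)"
  proof (intro sum.cong refl)
    fix m m' assume "m \<in> S" "m' \<in> S"
    then have "m \<in> V" "m' \<in> V" using S by auto
    then show "g m * g m' * (e m x * e m' x) = g m * g m' * e (vadd m m') x" using x by (simp add: e_vadd)
  qed
  also have "\<dots> = (\<Sum>P\<in>S \<times> S. g (fst P) * g (snd P) * e (vadd (fst P) (snd P)) x)"
    by (simp add: sum.cartesian_product case_prod_beta)
  also have "\<dots> = (\<Sum>z\<in>V. \<Sum>P\<in>{P. P \<in> S \<times> S \<and> vadd (fst P) (snd P) = z}. g (fst P) * g (snd P) * e (vadd (fst P) (snd P)) x)"
  proof (intro sum.group[symmetric])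
    show "finite (S \<times> S)" using fS by simp
    show "finite V" by (rule finV)
    show "(\<lambda>P. vadd (fst P) (snd P)) ` (S \<times> S) \<subseteq> V"
    proof (rule image_subsetI)
      fix P assume "P \<in> S \<times> S"
      then have "fst P \<in> V" "snd P \<in> V" using S by auto
      then show "vadd (fst P) (snd P) \<in> V" by (rule vadd_V)
    qed
  qed
  also have "\<dots> = (\<Sum>z\<in>V. (\<Sum>P\<in>Zs S z. g (fst P) * g (snd P)) * e z x)"
    unfolding Zs_def by (intro sum.cong refl) (simp add: sum_distrib_right)
  finally show ?thesis .
qed

lemma Zs_fin: "S \<subseteq> V \<Longrightarrow> finite (Zs S z)"
proof -
  assume S: "S \<subseteq> V"
  have "Zs S z \<subseteq> S \<times> S" by (auto simp: Zs_def)
  moreover have "finite (S \<times> S)" using S finV finite_subset by blast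
  ultimately show ?thesis by (rule finite_subset)
qed

lemma Zs_fst: assumes S: "S \<subseteq> V" shows "card {P \<in> Zs S z. fst P = m} \<le> 1"
proof -
  have "{P \<in> Zs S z. fst P = m} \<subseteq> {(m, vsub R z m)}"
  proof
    fix P assume P: "P \<in> {P \<in> Zs S z. fst P = m}"
    then have a: "fst P \<in> V" "snd P \<in> V" "vadd (fst P) (snd P) = z" and "fst P = m" using S by (auto simp: Zs_def)
    have "snd P = vsub R z (fst P)" by (rule vadd_eq[OF a])
    then have "snd P = vsub R z m" using \<open>fst P = m\<close> by simp
    then show "P \<in> {(m, vsub R z m)}" using \<open>fst P = m\<close> by (cases P) auto
  qed
  then have "card {P \<in> Zs S z. fst P = m} \<le> card {(m, vsub R z m)}" by (rule card_mono[rotated]) simp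
  then show ?thesis by simp
qed

lemma Zs_snd: assumes S: "S \<subseteq> V" shows "card {P \<in> Zs S z. snd P = m} \<le> 1"
proof -
  have "{P \<in> Zs S z. snd P = m} \<subseteq> {(vsub R z m, m)}"
  proof
    fix P assume P: "P \<in> {P \<in> Zs S z. snd P = m}"
    then have a: "fst P \<in> V" "snd P \<in> V" "vadd (fst P) (snd P) = z" and "snd P = m" using S by (auto simp: Zs_def)
    have "vadd (snd P) (fst P) = z" using vadd_comm[OF a(1,2)] a(3) by simp
    then have "fst P = vsub R z (snd P)" by (rule vadd_eq[OF a(2,1)])
    then have "fst P = vsub R z m" using \<open>snd P = m\<close> by simp
    then show "P \<in> {(vsub R z m, m)}" using \<open>snd P = m\<close> by (cases P) auto
  qed
  then have "card {P \<in> Zs S z. snd P = m} \<le> card {(vsub R z m, m)}" by (rule card_mono[rotated]) simp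
  then show ?thesis by simp
qed

lemma Zs_card: assumes S: "S = {m \<in> V. nrm m = t}" and z: "z \<in> V" "z \<noteq> (\<zero>, \<zero>)"
  shows "card (Zs S z) \<le> 2"
proof -
  have SV: "S \<subseteq> V" using S by auto
  have inj: "inj_on fst (Zs S z)"
  proof (rule inj_onI)
    fix P P' assume P: "P \<in> Zs S z" and P': "P' \<in> Zs S z" and f: "fst P = fst P'"
    have a: "fst P \<in> V" "snd P \<in> V" "vadd (fst P) (snd P) = z" using P SV by (auto simp: Zs_def)
    have b: "fst P' \<in> V" "snd P' \<in> V" "vadd (fst P') (snd P') = z" using P' SV by (auto simp: Zs_def)
    have "snd P = vsub R z (fst P)" using vadd_eq[OF a] .
    moreover have "snd P' = vsub R z (fst P')" using vadd_eq[OF b] .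
    ultimately show "P = P'" using f by (simp add: prod_eq_iff)
  qed
  have "fst ` Zs S z \<subseteq> {m \<in> V. nrm m = t \<and> nrm (vsub R z m) = t}"
  proof (rule image_subsetI)
    fix P assume P: "P \<in> Zs S z"
    then have a: "fst P \<in> V" "snd P \<in> V" "vadd (fst P) (snd P) = z" using SV by (auto simp: Zs_def)
    have "snd P = vsub R z (fst P)" using vadd_eq[OF a] .
    then show "fst P \<in> {m \<in> V. nrm m = t \<and> nrm (vsub R z m) = t}" using P S by (auto simp: Zs_def)
  qed
  moreover have "finite {m \<in> V. nrm m = t \<and> nrm (vsub R z m) = t}" using finV by simp
  ultimately have l1: "card (fst ` Zs S z) \<le> card {m \<in> V. nrm m = t \<and> nrm (vsub R z m) = t}"
    by (intro card_mono)
  have l2: "card {m \<in> V. nrm m = t \<and> nrm (vsub R z m) = t} \<le> 2" by (rule circ_line[OF z])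
  show ?thesis using card_image[OF inj] l1 l2 by linarith
qed

lemma c_bound:
  fixes g :: "'a \<times> 'a \<Rightarrow> complex"
  assumes S: "S = {m \<in> V. nrm m = t}"
  shows "(\<Sum>z\<in>V. (cmod (\<Sum>P\<in>Zs S z. g (fst P) * g (snd P)))\<^sup>2) \<le> 3 * (\<Sum>m\<in>S. (cmod (g m))\<^sup>2)\<^sup>2"
proof -
  have SV: "S \<subseteq> V" using S by auto
  have fS: "finite S" using SV finV finite_subset by blast
  define T where "T = (\<Sum>m\<in>S. (cmod (g m))\<^sup>2)"
  define h where "h P = cmod (g (fst P)) * cmod (g (snd P))" for P :: "('a \<times> 'a) \<times> ('a \<times> 'a)"
  define c where "c z = (\<Sum>P\<in>Zs S z. g (fst P) * g (snd P))" for z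
  have h0: "h P \<ge> 0" for P by (simp add: h_def)
  have cle: "cmod (c z) \<le> (\<Sum>P\<in>Zs S z. h P)" for z
    unfolding c_def h_def by (rule order.trans[OF norm_sum]) (simp add: norm_mult)
  have fstsum: "(\<Sum>P\<in>Zs S z. (\<lambda>m. (cmod (g m))\<^sup>2) (fst P)) \<le> real 1 * T" for z
    unfolding T_def
  proof (rule sum_fiber_le[OF Zs_fin[OF SV] fS])
    show "fst ` Zs S z \<subseteq> S" by (auto simp: Zs_def)
    show "card {a \<in> Zs S z. fst a = b} \<le> 1" for b by (rule Zs_fst[OF SV])
  qed (rule zero_le_power2)
  have sndsum: "(\<Sum>P\<in>Zs S z. (\<lambda>m. (cmod (g m))\<^sup>2) (snd P)) \<le> real 1 * T" for z
    unfolding T_def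
  proof (rule sum_fiber_le[OF Zs_fin[OF SV] fS])
    show "snd ` Zs S z \<subseteq> S" by (auto simp: Zs_def)
    show "card {a \<in> Zs S z. snd a = b} \<le> 1" for b by (rule Zs_snd[OF SV])
  qed (rule zero_le_power2)
  have c0: "(cmod (c (\<zero>, \<zero>)))\<^sup>2 \<le> T\<^sup>2"
  proof -
    have "(\<Sum>P\<in>Zs S (\<zero>, \<zero>). h P) \<le> (\<Sum>P\<in>Zs S (\<zero>, \<zero>). ((cmod (g (fst P)))\<^sup>2 + (cmod (g (snd P)))\<^sup>2) / 2)"
    proof (rule sum_mono)
      fix P
      have "0 \<le> (cmod (g (fst P)) - cmod (g (snd P)))\<^sup>2" by simp
      then show "h P \<le> ((cmod (g (fst P)))\<^sup>2 + (cmod (g (snd P)))\<^sup>2) / 2"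
        unfolding h_def by (simp add: power2_diff field_simps)
    qed
    also have "\<dots> = ((\<Sum>P\<in>Zs S (\<zero>, \<zero>). (cmod (g (fst P)))\<^sup>2) + (\<Sum>P\<in>Zs S (\<zero>, \<zero>). (cmod (g (snd P)))\<^sup>2)) / 2"
      by (simp only: sum.distrib[symmetric] sum_divide_distrib[symmetric])
    also have "\<dots> \<le> (T + T) / 2" using fstsum[of "(\<zero>, \<zero>)"] sndsum[of "(\<zero>, \<zero>)"] by simp
    finally have "cmod (c (\<zero>, \<zero>)) \<le> T" using cle[of "(\<zero>, \<zero>)"] by simp
    then show ?thesis by (simp add: power_mono)
  qed
  have cz: "(cmod (c z))\<^sup>2 \<le> 2 * (\<Sum>P\<in>Zs S z. (h P)\<^sup>2)" if z: "z \<in> V" "z \<noteq> (\<zero>, \<zero>)" for z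
  proof -
    have a2: "(cmod (c z))\<^sup>2 \<le> (\<Sum>P\<in>Zs S z. h P)\<^sup>2" using cle[of z] by (intro power_mono) simp_all
    have a3: "(\<Sum>P\<in>Zs S z. h P)\<^sup>2 \<le> real (card (Zs S z)) * (\<Sum>P\<in>Zs S z. (h P)\<^sup>2)" by (rule CS_card)
    have a4: "real (card (Zs S z)) \<le> 2" using Zs_card[OF S z] by simp
    have a5: "0 \<le> (\<Sum>P\<in>Zs S z. (h P)\<^sup>2)" by (intro sum_nonneg) simp
    have "real (card (Zs S z)) * (\<Sum>P\<in>Zs S z. (h P)\<^sup>2) \<le> 2 * (\<Sum>P\<in>Zs S z. (h P)\<^sup>2)"
      by (rule mult_right_mono[OF a4 a5])
    then show ?thesis by (rule order.trans[OF a2 order.trans[OF a3]])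
  qed
  have tot: "(\<Sum>z\<in>V. \<Sum>P\<in>Zs S z. (h P)\<^sup>2) = T\<^sup>2"
  proof -
    have "(\<Sum>z\<in>V. \<Sum>P\<in>Zs S z. (h P)\<^sup>2) = (\<Sum>P\<in>S \<times> S. (h P)\<^sup>2)"
      unfolding Zs_def
    proof (rule sum.group)
      show "finite (S \<times> S)" using fS by simp
      show "finite V" by (rule finV)
      show "(\<lambda>P. vadd (fst P) (snd P)) ` (S \<times> S) \<subseteq> V"
      proof (rule image_subsetI)
        fix P assume "P \<in> S \<times> S"
        then have "fst P \<in> V" "snd P \<in> V" using SV by auto
        then show "vadd (fst P) (snd P) \<in> V" by (rule vadd_V)
      qed
    qed
    also have "\<dots> = (\<Sum>m\<in>S. \<Sum>m'\<in>S. (cmod (g m))\<^sup>2 * (cmod (g m'))\<^sup>2)"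
      unfolding h_def power_mult_distrib by (subst sum.cartesian_product) (simp add: case_prod_beta)
    also have "\<dots> = T\<^sup>2" unfolding T_def power2_eq_square[of "sum _ _"] by (rule sum_product[symmetric])
    finally show ?thesis .
  qed
  have z0: "(\<zero>, \<zero>) \<in> V" by simp
  have e1: "(\<Sum>z\<in>V. (cmod (c z))\<^sup>2) = (cmod (c (\<zero>, \<zero>)))\<^sup>2 + (\<Sum>z\<in>V - {(\<zero>, \<zero>)}. (cmod (c z))\<^sup>2)"
    by (rule sum.remove[OF finV z0])
  have e2: "(\<Sum>z\<in>V - {(\<zero>, \<zero>)}. (cmod (c z))\<^sup>2) \<le> (\<Sum>z\<in>V - {(\<zero>, \<zero>)}. 2 * (\<Sum>P\<in>Zs S z. (h P)\<^sup>2))"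
  proof (rule sum_mono)
    fix z assume "z \<in> V - {(\<zero>, \<zero>)}"
    then have "z \<in> V" "z \<noteq> (\<zero>, \<zero>)" by simp_all
    then show "(cmod (c z))\<^sup>2 \<le> 2 * (\<Sum>P\<in>Zs S z. (h P)\<^sup>2)" by (rule cz)
  qed
  have e3: "(\<Sum>z\<in>V - {(\<zero>, \<zero>)}. 2 * (\<Sum>P\<in>Zs S z. (h P)\<^sup>2)) \<le> (\<Sum>z\<in>V. 2 * (\<Sum>P\<in>Zs S z. (h P)\<^sup>2))"
  proof (rule sum_mono2[OF finV])
    show "V - {(\<zero>, \<zero>)} \<subseteq> V" by blast
    fix z
    have "0 \<le> (\<Sum>P\<in>Zs S z. (h P)\<^sup>2)" by (rule sum_nonneg) simp
    then show "0 \<le> 2 * (\<Sum>P\<in>Zs S z. (h P)\<^sup>2)" by simp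
  qed
  have e4: "(\<Sum>z\<in>V. 2 * (\<Sum>P\<in>Zs S z. (h P)\<^sup>2)) = 2 * T\<^sup>2" using tot by (simp only: sum_distrib_left[symmetric])
  have "(\<Sum>z\<in>V. (cmod (c z))\<^sup>2) \<le> 3 * T\<^sup>2"
    unfolding e1 using add_mono[OF c0 order.trans[OF e2 e3]] e4 by simp
  then show ?thesis unfolding c_def T_def .
qed

lemma restriction:
  assumes E: "E \<subseteq> V" and S: "S = {m \<in> V. nrm m = t}"
  shows "(\<Sum>m\<in>S. (cmod (A E m))\<^sup>2)\<^sup>2 \<le> 3 * real q ^ 2 * real (card E) ^ 3"
proof -
  have SV: "S \<subseteq> V" using S by auto
  have fS: "finite S" using SV finV finite_subset by blast
  have fE: "finite E" using E finV finite_subset by blast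
  define g where "g m = cnj (A E m)" for m
  define G where "G x = (\<Sum>m\<in>S. g m * e m x)" for x
  define R where "R = (\<Sum>m\<in>S. (cmod (A E m))\<^sup>2)"
  define N where "N = real (card E)"
  define X where "X = (\<Sum>x\<in>E. (cmod (G x))\<^sup>2)"
  define Y where "Y = (\<Sum>x\<in>E. ((cmod (G x))\<^sup>2)\<^sup>2)"
  have R0: "R \<ge> 0" unfolding R_def by (intro sum_nonneg) simp
  have X0: "X \<ge> 0" unfolding X_def by (intro sum_nonneg) simp
  have N0: "N \<ge> 0" unfolding N_def by simp
  have s1: "(\<Sum>x\<in>E. G x) = complex_of_real R"
  proof -
    have "(\<Sum>x\<in>E. G x) = (\<Sum>m\<in>S. \<Sum>x\<in>E. g m * e m x)" unfolding G_def by (rule sum.swap)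
    also have "\<dots> = (\<Sum>m\<in>S. g m * A E m)" by (simp add: A_def sum_distrib_left)
    also have "\<dots> = (\<Sum>m\<in>S. complex_of_real ((cmod (A E m))\<^sup>2))"
      by (intro sum.cong refl) (simp only: g_def complex_norm_square mult.commute)
    also have "\<dots> = complex_of_real R" by (simp add: R_def)
    finally show ?thesis .
  qed
  have s2: "R \<le> (\<Sum>x\<in>E. cmod (G x))"
  proof -
    have "R = cmod (complex_of_real R)" using R0 by simp
    also have "\<dots> = cmod (\<Sum>x\<in>E. G x)" using s1 by simp
    also have "\<dots> \<le> (\<Sum>x\<in>E. cmod (G x))" by (rule norm_sum)
    finally show ?thesis .
  qed
  have s3: "R\<^sup>2 \<le> N * X"
  proof -
    have "R\<^sup>2 \<le> (\<Sum>x\<in>E. cmod (G x))\<^sup>2" using s2 R0 by (intro power_mono) simp_all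
    also have "\<dots> \<le> N * X" unfolding N_def X_def by (rule CS_card)
    finally show ?thesis .
  qed
  have s4: "X\<^sup>2 \<le> N * Y" unfolding N_def X_def Y_def by (rule CS_card)
  have s5: "Y \<le> (\<Sum>x\<in>V. ((cmod (G x))\<^sup>2)\<^sup>2)" unfolding Y_def
    by (rule sum_mono2[OF finV E]) simp
  have s6: "(\<Sum>x\<in>V. ((cmod (G x))\<^sup>2)\<^sup>2) \<le> 3 * real q ^ 2 * R\<^sup>2"
  proof -
    define c where "c z = (\<Sum>P\<in>Zs S z. g (fst P) * g (snd P))" for z
    have "(\<Sum>x\<in>V. ((cmod (G x))\<^sup>2)\<^sup>2) = (\<Sum>x\<in>V. (cmod (\<Sum>z\<in>V. c z * e z x))\<^sup>2)"
    proof (intro sum.cong refl)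
      fix x assume x: "x \<in> V"
      have "((cmod (G x))\<^sup>2)\<^sup>2 = (cmod (G x * G x))\<^sup>2" by (simp add: norm_mult power2_eq_square)
      also have "G x * G x = (\<Sum>z\<in>V. c z * e z x)" unfolding G_def c_def by (rule G_sq[OF SV x])
      finally show "((cmod (G x))\<^sup>2)\<^sup>2 = (cmod (\<Sum>z\<in>V. c z * e z x))\<^sup>2" .
    qed
    also have "\<dots> = real q ^ 2 * (\<Sum>z\<in>V. (cmod (c z))\<^sup>2)" by (rule plancherel)
    also have "(\<Sum>z\<in>V. (cmod (c z))\<^sup>2) \<le> 3 * (\<Sum>m\<in>S. (cmod (g m))\<^sup>2)\<^sup>2"
      unfolding c_def by (rule c_bound[OF S])
    also have "(\<Sum>m\<in>S. (cmod (g m))\<^sup>2) = R" by (simp add: g_def R_def)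
    finally show ?thesis by (simp add: mult.assoc mult_left_mono)
  qed
  have "(R\<^sup>2)\<^sup>2 \<le> (N * X)\<^sup>2" using s3 by (intro power_mono) simp_all
  also have "\<dots> = N\<^sup>2 * X\<^sup>2" by (simp add: power_mult_distrib)
  also have "\<dots> \<le> N\<^sup>2 * (N * Y)" using s4 by (intro mult_left_mono) simp_all
  also have "\<dots> \<le> N\<^sup>2 * (N * (3 * real q ^ 2 * R\<^sup>2))"
    using s5 s6 N0 by (intro mult_left_mono) simp_all
  finally have key: "(R\<^sup>2)\<^sup>2 \<le> (3 * real q ^ 2 * N ^ 3) * R\<^sup>2" by (simp add: algebra_simps power2_eq_square power3_eq_cube)
  show ?thesis
  proof (cases "R = 0")
    case True then show ?thesis by (simp add: R_def[symmetric])
  next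
    case False
    then have "R\<^sup>2 > 0" by simp
    have k2: "R\<^sup>2 * R\<^sup>2 \<le> (3 * real q ^ 2 * N ^ 3) * R\<^sup>2" using key unfolding power2_eq_square[of "R\<^sup>2"] .
    have "R\<^sup>2 \<le> 3 * real q ^ 2 * N ^ 3" by (rule mult_right_le_imp_le[OF k2 \<open>R\<^sup>2 > 0\<close>])
    then show ?thesis by (simp add: R_def N_def)
  qed
qed

end

context fqc begin

definition gg :: "'a mat2 \<Rightarrow> ('a \<times> 'a) \<times> ('a \<times> 'a) \<Rightarrow> 'a \<times> 'a" where
  "gg \<theta> P = vsub R (fst P) (mat2_apply R \<theta> (snd P))"

lemma mat2_V: "\<theta> \<in> orth2 R \<Longrightarrow> v \<in> V \<Longrightarrow> mat2_apply R \<theta> v \<in> V"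
  by (cases \<theta>) (auto simp: mat2_apply_def orth2_def)

lemma gg_V: "\<theta> \<in> orth2 R \<Longrightarrow> E \<subseteq> V \<Longrightarrow> P \<in> E \<times> E \<Longrightarrow> gg \<theta> P \<in> V"
proof -
  assume h: "\<theta> \<in> orth2 R" "E \<subseteq> V" "P \<in> E \<times> E"
  then have "fst P \<in> V" "snd P \<in> V" by auto
  then show ?thesis unfolding gg_def using h(1) by (intro vsub_V mat2_V)
qed

lemma lam_real: assumes E: "E \<subseteq> V"
  shows "real (lam R E \<theta> w) = (\<Sum>P\<in>E \<times> E. if gg \<theta> P = w then 1 else 0)"
proof -
  have fE: "finite (E \<times> E)" using E finV finite_subset by blast
  have "{(u, v) \<in> E \<times> E. vsub R u (mat2_apply R \<theta> v) = w} = {P \<in> E \<times> E. gg \<theta> P = w}"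
    by (auto simp: gg_def)
  then have "lam R E \<theta> w = card {P \<in> E \<times> E. gg \<theta> P = w}" by (simp add: lam_def)
  also have "real \<dots> = (\<Sum>P\<in>{P \<in> E \<times> E. gg \<theta> P = w}. 1)" by simp
  also have "\<dots> = (\<Sum>P\<in>E \<times> E. if gg \<theta> P = w then 1 else 0)" by (rule sum.inter_filter[OF fE])
  finally show ?thesis .
qed

lemma lam_sum: assumes E: "E \<subseteq> V" and th: "\<theta> \<in> orth2 R"
  shows "(\<Sum>w\<in>V. real (lam R E \<theta> w)) = real (card E) ^ 2"
proof -
  have "(\<Sum>w\<in>V. real (lam R E \<theta> w)) = (\<Sum>w\<in>V. \<Sum>P\<in>E \<times> E. if gg \<theta> P = w then 1 else 0)"
    using lam_real[OF E] by simp
  also have "\<dots> = (\<Sum>P\<in>E \<times> E. \<Sum>w\<in>V. if gg \<theta> P = w then 1 else 0)" by (rule sum.swap)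
  also have "\<dots> = (\<Sum>P\<in>E \<times> E. 1)"
    using gg_V[OF th E] by (intro sum.cong refl) (simp add: sum.delta'[OF finV])
  also have "\<dots> = real (card E) ^ 2" by (simp add: card_cartesian_product power2_eq_square)
  finally show ?thesis .
qed

lemma lam_fourier: assumes E: "E \<subseteq> V" and th: "\<theta> \<in> orth2 R" and m: "m \<in> V"
  shows "(\<Sum>w\<in>V. complex_of_real (real (lam R E \<theta> w)) * e w m) = A E m * cnj (A E (tr \<theta> m))"
proof -
  have "(\<Sum>w\<in>V. complex_of_real (real (lam R E \<theta> w)) * e w m)
      = (\<Sum>w\<in>V. \<Sum>P\<in>E \<times> E. (if gg \<theta> P = w then e w m else 0))"
  proof (intro sum.cong refl)
    fix w assume w: "w \<in> V"
    have "complex_of_real (real (lam R E \<theta> w)) = (\<Sum>P\<in>E \<times> E. if gg \<theta> P = w then 1 else 0)"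
      using lam_real[OF E] by (simp add: if_distrib cong: if_cong)
    then have "complex_of_real (real (lam R E \<theta> w)) * e w m = (\<Sum>P\<in>E \<times> E. (if gg \<theta> P = w then 1 else 0) * e w m)"
      by (simp add: sum_distrib_right)
    also have "\<dots> = (\<Sum>P\<in>E \<times> E. if gg \<theta> P = w then e w m else 0)" by (intro sum.cong) auto
    finally show "complex_of_real (real (lam R E \<theta> w)) * e w m = (\<Sum>P\<in>E \<times> E. if gg \<theta> P = w then e w m else 0)" .
  qed
  also have "\<dots> = (\<Sum>P\<in>E \<times> E. \<Sum>w\<in>V. (if gg \<theta> P = w then e w m else 0))" by (rule sum.swap)
  also have "\<dots> = (\<Sum>P\<in>E \<times> E. e (gg \<theta> P) m)"
    using gg_V[OF th E] by (intro sum.cong refl) (simp add: sum.delta'[OF finV])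
  also have "\<dots> = (\<Sum>P\<in>E \<times> E. e m (fst P) * cnj (e (tr \<theta> m) (snd P)))"
  proof (intro sum.cong refl)
    fix P assume P: "P \<in> E \<times> E"
    then have u: "fst P \<in> V" and v: "snd P \<in> V" using E by auto
    have tv: "mat2_apply R \<theta> (snd P) \<in> V" by (rule mat2_V[OF th v])
    have "e (gg \<theta> P) m = e (fst P) m * cnj (e (mat2_apply R \<theta> (snd P)) m)"
      unfolding gg_def by (rule e_vsub[OF u tv m])
    also have "e (fst P) m = e m (fst P)" by (rule e_sym[OF u m])
    also have "e (mat2_apply R \<theta> (snd P)) m = e (tr \<theta> m) (snd P)"
      using e_sym[OF tv m] dot_tr[OF th m v] by (simp add: e_def)
    finally show "e (gg \<theta> P) m = e m (fst P) * cnj (e (tr \<theta> m) (snd P))" .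
  qed
  also have "\<dots> = A E m * cnj (A E (tr \<theta> m))"
    by (simp add: A_def sum_product sum.cartesian_product case_prod_beta)
  finally show ?thesis .
qed

lemma q_pos: "q > 0" using fin by (simp add: card_gt_0_iff) (use one_closed in blast)

lemma card_V: "card V = q ^ 2" by (simp add: card_cartesian_product power2_eq_square)

lemma lam_sq: assumes E: "E \<subseteq> V" and th: "\<theta> \<in> orth2 R"
  shows "real q ^ 2 * (\<Sum>w\<in>V. (real (lam R E \<theta> w))\<^sup>2) = (\<Sum>m\<in>V. (cmod (A E m))\<^sup>2 * (cmod (A E (tr \<theta> m)))\<^sup>2)"
proof -
  let ?c = "\<lambda>w. complex_of_real (real (lam R E \<theta> w))"
  have "(\<Sum>m\<in>V. (cmod (\<Sum>w\<in>V. ?c w * e w m))\<^sup>2) = real q ^ 2 * (\<Sum>w\<in>V. (cmod (?c w))\<^sup>2)"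
    by (rule plancherel)
  moreover have "(\<Sum>m\<in>V. (cmod (\<Sum>w\<in>V. ?c w * e w m))\<^sup>2) = (\<Sum>m\<in>V. (cmod (A E m))\<^sup>2 * (cmod (A E (tr \<theta> m)))\<^sup>2)"
    using lam_fourier[OF E th] by (intro sum.cong refl) (simp add: norm_mult power_mult_distrib)
  moreover have "(\<Sum>w\<in>V. (cmod (?c w))\<^sup>2) = (\<Sum>w\<in>V. (real (lam R E \<theta> w))\<^sup>2)" by simp
  ultimately show ?thesis by simp
qed

lemma A0: assumes E: "E \<subseteq> V" shows "A E (\<zero>, \<zero>) = of_nat (card E)"
proof -
  have "A E (\<zero>, \<zero>) = (\<Sum>u\<in>E. 1)" unfolding A_def
    using E by (intro sum.cong refl) (auto simp: e_def dot_def chi_zero)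
  then show ?thesis by simp
qed

lemma var_id: assumes E: "E \<subseteq> V" and th: "\<theta> \<in> orth2 R"
  shows "(\<Sum>w\<in>V. (real (lam R E \<theta> w))\<^sup>2) = (\<Sum>w\<in>V. (real (lam R E \<theta> w) - real (card E) ^ 2 / real q ^ 2)\<^sup>2) + real (card E) ^ 4 / real q ^ 2"
proof -
  define c where "c = real (card E) ^ 2 / real q ^ 2"
  have qq: "real q ^ 2 > 0" using q_pos by simp
  have "(\<Sum>w\<in>V. (real (lam R E \<theta> w) - c)\<^sup>2) = (\<Sum>w\<in>V. (real (lam R E \<theta> w))\<^sup>2 - 2 * c * real (lam R E \<theta> w) + c\<^sup>2)"
    by (intro sum.cong refl) (simp add: power2_diff)
  also have "\<dots> = (\<Sum>w\<in>V. (real (lam R E \<theta> w))\<^sup>2) - 2 * c * (\<Sum>w\<in>V. real (lam R E \<theta> w)) + real (card V) * c\<^sup>2"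
    by (simp add: sum.distrib sum_subtractf sum_distrib_left)
  also have "\<dots> = (\<Sum>w\<in>V. (real (lam R E \<theta> w))\<^sup>2) - 2 * c * real (card E) ^ 2 + real q ^ 2 * c\<^sup>2"
    using lam_sum[OF E th] card_V by simp
  also have "2 * c * real (card E) ^ 2 - real q ^ 2 * c\<^sup>2 = real (card E) ^ 4 / real q ^ 2"
    using qq unfolding c_def by (simp add: field_simps power2_eq_square power4_eq_xxxx)
  ultimately show ?thesis unfolding c_def by linarith
qed

lemma per_theta: assumes E: "E \<subseteq> V" and th: "\<theta> \<in> orth2 R"
  shows "(\<Sum>w\<in>V. (real (lam R E \<theta> w) - real (card E) ^ 2 / real q ^ 2)\<^sup>2)
     = (\<Sum>m\<in>V - {(\<zero>, \<zero>)}. (cmod (A E m))\<^sup>2 * (cmod (A E (tr \<theta> m)))\<^sup>2) / real q ^ 2"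
proof -
  have qq: "real q ^ 2 > 0" using q_pos by simp
  have z0: "(\<zero>, \<zero>) \<in> V" by simp
  have "real q ^ 2 * (\<Sum>w\<in>V. (real (lam R E \<theta> w))\<^sup>2)
     = (cmod (A E (\<zero>, \<zero>)))\<^sup>2 * (cmod (A E (tr \<theta> (\<zero>, \<zero>))))\<^sup>2 + (\<Sum>m\<in>V - {(\<zero>, \<zero>)}. (cmod (A E m))\<^sup>2 * (cmod (A E (tr \<theta> m)))\<^sup>2)"
    unfolding lam_sq[OF E th] by (rule sum.remove[OF finV z0])
  also have "(cmod (A E (\<zero>, \<zero>)))\<^sup>2 * (cmod (A E (tr \<theta> (\<zero>, \<zero>))))\<^sup>2 = real (card E) ^ 4"
    using A0[OF E] tr_zero[OF th] by (simp add: power4_eq_xxxx power2_eq_square)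
  finally have "real q ^ 2 * (\<Sum>w\<in>V. (real (lam R E \<theta> w))\<^sup>2) = real (card E) ^ 4 + (\<Sum>m\<in>V - {(\<zero>, \<zero>)}. (cmod (A E m))\<^sup>2 * (cmod (A E (tr \<theta> m)))\<^sup>2)" .
  then have "(\<Sum>w\<in>V. (real (lam R E \<theta> w))\<^sup>2) = real (card E) ^ 4 / real q ^ 2 + (\<Sum>m\<in>V - {(\<zero>, \<zero>)}. (cmod (A E m))\<^sup>2 * (cmod (A E (tr \<theta> m)))\<^sup>2) / real q ^ 2"
    using qq by (simp add: field_simps)
  then show ?thesis using var_id[OF E th] by linarith
qed

lemma orbit_bound: assumes E: "E \<subseteq> V" and m: "m \<in> V" "m \<noteq> (\<zero>, \<zero>)"
  shows "(\<Sum>\<theta>\<in>orth2 R. (cmod (A E (tr \<theta> m)))\<^sup>2) \<le> 2 * (sqrt 3 * real q * sqrt (real (card E) ^ 3))"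
proof -
  let ?S = "{m' \<in> V. nrm m' = nrm m}"
  have "(\<Sum>\<theta>\<in>orth2 R. (\<lambda>x. (cmod (A E x))\<^sup>2) (tr \<theta> m)) \<le> real 2 * (\<Sum>x\<in>?S. (cmod (A E x))\<^sup>2)"
  proof (rule sum_fiber_le[OF fin_orth])
    show "finite ?S" using finV by simp
    show "(\<lambda>\<theta>. tr \<theta> m) ` orth2 R \<subseteq> ?S"
    proof (rule image_subsetI)
      fix th assume th: "th \<in> orth2 R"
      show "tr th m \<in> ?S" using tr_V[OF th m(1)] nrm_tr[OF th m(1)] by simp
    qed
    show "card {a \<in> orth2 R. tr a m = b} \<le> 2" for b by (rule fiber_le2[OF m])
  qed simp
  moreover have "(\<Sum>x\<in>?S. (cmod (A E x))\<^sup>2) \<le> sqrt 3 * real q * sqrt (real (card E) ^ 3)"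
  proof -
    have "(\<Sum>x\<in>?S. (cmod (A E x))\<^sup>2)\<^sup>2 \<le> 3 * real q ^ 2 * real (card E) ^ 3"
      by (rule restriction[OF E refl])
    then have "(\<Sum>x\<in>?S. (cmod (A E x))\<^sup>2) \<le> sqrt (3 * real q ^ 2 * real (card E) ^ 3)"
      by (rule real_le_rsqrt)
    also have "\<dots> = sqrt 3 * real q * sqrt (real (card E) ^ 3)" by (simp add: real_sqrt_mult)
    finally show ?thesis .
  qed
  ultimately show ?thesis by simp
qed

lemma powr52: "x \<ge> 0 \<Longrightarrow> x * sqrt (x ^ 3) = x powr (5/2)"
proof -
  assume x: "x \<ge> 0"
  show ?thesis
  proof (cases "x = 0")
    case True then show ?thesis by simp
  next
    case False
    then have xp: "x > 0" using x by simp
    have "x powr (5/2) = x powr (2 + 1/2)" by simp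
    also have "\<dots> = x powr 2 * x powr (1/2)" by (rule powr_add)
    also have "\<dots> = x ^ 2 * sqrt x" using xp by (simp add: powr_half_sqrt powr_numeral)
    also have "sqrt (x ^ 3) = x * sqrt x" using x
      by (simp add: power3_eq_cube real_sqrt_mult real_sqrt_mult_self)
    ultimately show ?thesis by (simp add: power2_eq_square)
  qed
qed

lemma main1: assumes E: "E \<subseteq> V"
  shows "(\<Sum>\<theta>\<in>orth2 R. \<Sum>w\<in>V. (real (lam R E \<theta> w) - real (card E) ^ 2 / real q ^ 2)\<^sup>2)
    \<le> 4 * (real q * real (card E) powr (5/2))"
proof -
  define N where "N = real (card E)"
  define Rb where "Rb = sqrt 3 * real q * sqrt (N ^ 3)"
  define a where "a m = (cmod (A E m))\<^sup>2" for m
  define V' where "V' = V - {(\<zero>, \<zero>)}"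
  have qq: "real q ^ 2 > 0" using q_pos by simp
  have Rb0: "Rb \<ge> 0" by (simp add: Rb_def N_def)
  have "(\<Sum>\<theta>\<in>orth2 R. \<Sum>w\<in>V. (real (lam R E \<theta> w) - real (card E) ^ 2 / real q ^ 2)\<^sup>2)
      = (\<Sum>\<theta>\<in>orth2 R. (\<Sum>m\<in>V'. a m * (cmod (A E (tr \<theta> m)))\<^sup>2) / real q ^ 2)"
    using per_theta[OF E] by (simp add: a_def V'_def)
  also have "\<dots> = (\<Sum>m\<in>V'. a m * (\<Sum>\<theta>\<in>orth2 R. (cmod (A E (tr \<theta> m)))\<^sup>2)) / real q ^ 2"
    by (simp add: sum_divide_distrib[symmetric] sum_distrib_left sum.swap[of _ "orth2 R"])
  also have "\<dots> \<le> (\<Sum>m\<in>V'. a m * (2 * Rb)) / real q ^ 2"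
  proof (rule divide_right_mono)
    show "(\<Sum>m\<in>V'. a m * (\<Sum>\<theta>\<in>orth2 R. (cmod (A E (tr \<theta> m)))\<^sup>2)) \<le> (\<Sum>m\<in>V'. a m * (2 * Rb))"
    proof (rule sum_mono)
      fix m assume "m \<in> V'"
      then have m: "m \<in> V" "m \<noteq> (\<zero>, \<zero>)" by (auto simp: V'_def)
      show "a m * (\<Sum>\<theta>\<in>orth2 R. (cmod (A E (tr \<theta> m)))\<^sup>2) \<le> a m * (2 * Rb)"
        using orbit_bound[OF E m] by (intro mult_left_mono) (simp_all add: a_def Rb_def N_def)
    qed
  qed simp
  also have "(\<Sum>m\<in>V'. a m * (2 * Rb)) = (\<Sum>m\<in>V'. a m) * (2 * Rb)" by (simp add: sum_distrib_right)
  also have "(\<Sum>m\<in>V'. a m) \<le> (\<Sum>m\<in>V. a m)"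
    by (rule sum_mono2[OF finV]) (auto simp: V'_def a_def)
  also have "(\<Sum>m\<in>V. a m) = real q ^ 2 * N" unfolding a_def N_def by (rule A_plancherel[OF E])
  finally have "(\<Sum>\<theta>\<in>orth2 R. \<Sum>w\<in>V. (real (lam R E \<theta> w) - real (card E) ^ 2 / real q ^ 2)\<^sup>2)
     \<le> real q ^ 2 * N * (2 * Rb) / real q ^ 2"
    using Rb0 qq by (simp add: divide_right_mono mult_right_mono)
  also have "\<dots> = 2 * sqrt 3 * real q * (N * sqrt (N ^ 3))" using qq by (simp add: Rb_def field_simps)
  also have "N * sqrt (N ^ 3) = N powr (5/2)" by (rule powr52) (simp add: N_def)
  also have "2 * sqrt 3 * real q * N powr (5/2) \<le> 4 * (real q * N powr (5/2))"
  proof -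
    have "sqrt 3 \<le> 2" by (rule real_le_lsqrt) simp_all
    moreover have "0 \<le> real q * N powr (5/2)" by simp
    ultimately have "(2 * sqrt 3) * (real q * N powr (5/2)) \<le> 4 * (real q * N powr (5/2))"
      by (intro mult_right_mono) simp_all
    then show ?thesis by (simp add: mult.assoc)
  qed
  finally show ?thesis by (simp add: N_def)
qed

lemma main2: assumes E: "E \<subseteq> V"
  shows "(\<Sum>\<theta>\<in>orth2 R. \<Sum>w\<in>V. (real (lam R E \<theta> w))\<^sup>2)
    \<le> 4 * (real q * real (card E) powr (5/2) + real (card E) ^ 4 / real q)"
proof -
  have qp: "real q > 0" using q_pos by simp
  have "(\<Sum>\<theta>\<in>orth2 R. \<Sum>w\<in>V. (real (lam R E \<theta> w))\<^sup>2)
     = (\<Sum>\<theta>\<in>orth2 R. (\<Sum>w\<in>V. (real (lam R E \<theta> w) - real (card E) ^ 2 / real q ^ 2)\<^sup>2) + real (card E) ^ 4 / real q ^ 2)"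
    using var_id[OF E] by simp
  also have "\<dots> = (\<Sum>\<theta>\<in>orth2 R. \<Sum>w\<in>V. (real (lam R E \<theta> w) - real (card E) ^ 2 / real q ^ 2)\<^sup>2)
     + real (card (orth2 R)) * (real (card E) ^ 4 / real q ^ 2)" by (simp add: sum.distrib)
  also have "real (card (orth2 R)) * (real (card E) ^ 4 / real q ^ 2) \<le> (4 * real q) * (real (card E) ^ 4 / real q ^ 2)"
    using card_orth by (intro mult_right_mono) simp_all
  also have "(4 * real q) * (real (card E) ^ 4 / real q ^ 2) = 4 * (real (card E) ^ 4 / real q)"
    using qp by (simp add: power2_eq_square field_simps)
  finally show ?thesis using main1[OF E] by (simp add: algebra_simps)
qed

end

lemma final:
  fixes R :: "('a, 'b) ring_scheme"
  assumes "field R" "prime p" "p mod 4 = 3" "odd n" "card (carrier R) = p ^ n"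
    and E: "E \<subseteq> carrier R \<times> carrier R"
  shows "(\<Sum>\<theta>\<in>orth2 R. \<Sum>w\<in>carrier R \<times> carrier R. (real (lam R E \<theta> w) - real (card E) ^ 2 / real (card (carrier R)) ^ 2)\<^sup>2)
    \<le> 4 * (real (card (carrier R)) * real (card E) powr (5/2)) \<and>
    (\<Sum>\<theta>\<in>orth2 R. \<Sum>w\<in>carrier R \<times> carrier R. (real (lam R E \<theta> w))\<^sup>2)
    \<le> 4 * (real (card (carrier R)) * real (card E) powr (5/2) + real (card E) ^ 4 / real (card (carrier R)))"
proof -
  have "fq R p n" unfolding fq_def fq_axioms_def using assms by simp
  then interpret fq R p n .
  obtain chi :: "'a \<Rightarrow> complex" where chi: "\<forall>x\<in>carrier R. \<forall>y\<in>carrier R. chi (x \<oplus>\<^bsub>R\<^esub> y) = chi x * chi y"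
    "\<forall>x. cmod (chi x) = 1" "\<exists>x0\<in>carrier R. chi x0 \<noteq> 1"
    using psi_exists by blast
  have "fqc R p n chi" unfolding fqc_def fqc_axioms_def using chi \<open>fq R p n\<close> by simp
  then interpret fqc R p n chi .
  show ?thesis using main1[OF E] main2[OF E] by simp
qed

theorem lemma2p2:
  "\<exists>C::real. C > 0 \<and>
    (\<forall>(R :: nat ring) (p::nat) (n::nat) (E :: (nat \<times> nat) set).
       field R \<and> prime p \<and> p mod 4 = 3 \<and> odd n \<and> card (carrier R) = p ^ n \<and>
       E \<subseteq> carrier R \<times> carrier R \<longrightarrow>
       (let q = real (card (carrier R)); F2 = carrier R \<times> carrier R in
         (\<Sum>\<theta>\<in>orth2 R. \<Sum>w\<in>F2. (real (lam R E \<theta> w) - real (card E) ^ 2 / q ^ 2) ^ 2)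
            \<le> C * (q * real (card E) powr (5/2)) \<and>
         (\<Sum>\<theta>\<in>orth2 R. \<Sum>w\<in>F2. real (lam R E \<theta> w) ^ 2)
            \<le> C * (q * real (card E) powr (5/2) + real (card E) ^ 4 / q)))"
proof (rule exI[of _ 4], intro conjI allI impI)
  show "(0::real) < 4" by simp
  fix R :: "nat ring" and p n :: nat and E :: "(nat \<times> nat) set"
  assume h: "field R \<and> prime p \<and> p mod 4 = 3 \<and> odd n \<and> card (carrier R) = p ^ n \<and>
       E \<subseteq> carrier R \<times> carrier R"
  then show "let q = real (card (carrier R)); F2 = carrier R \<times> carrier R in
         (\<Sum>\<theta>\<in>orth2 R. \<Sum>w\<in>F2. (real (lam R E \<theta> w) - real (card E) ^ 2 / q ^ 2) ^ 2)
            \<le> 4 * (q * real (card E) powr (5/2)) \<and>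
         (\<Sum>\<theta>\<in>orth2 R. \<Sum>w\<in>F2. real (lam R E \<theta> w) ^ 2)
            \<le> 4 * (q * real (card E) powr (5/2) + real (card E) ^ 4 / q)"
    using final[of R p n E] by (simp add: Let_def)
qed

end
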